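(* Let $(Z,d,\mu)$, $Q$, $X$ be as in the context, and let $0<s<\infty$, $Q/(Q+s)<p\le\infty$, $0<q\le\infty$. Then the operator \[ Tu(x):=\sum_{|y|\ge|x|,\ B(y)\cap B(x)\ne\emptyset}\frac{\mu(B(y))}{\mu(B(x))}u(y) \] is well-defined and bounded on $\mathcal I^s_{p,q}(X)$. Moreover, if $\Psi:X\to X$ is a map such that $B(\Psi(x))\cap B(x)\ne\emptyset$ for all $x$ and there is $\sigma\ge0$ with $||\Psi(x)|-|x||\le\sigma$ for all $x$, then $u\mapsto (Tu)\circ\Psi$ is also well-defined and bounded on $\mathcal I^s_{p,q}(X)$.
   Context: $(Z,d,\mu)$ is a metric measure space, $\mu$ Borel regular, every ball has positive finite measure, and $\mu$ is doubling. Fix constants $C\ge1$, $Q>0$ with $\mu(B(\xi,\lambda r)) \le C\lambda^Q\mu(B(\xi,r))$ for all $\xi\in Z$, $r>0$, $\lambda\ge1$. Hyperbolic filling: for each $n\in\mathbb Z$ let $(\xi_x)_{x\in X_n}$ be a maximal set of points of $Z$ with pairwise distances at least $2^{-n-1}$; $X=\bigsqcup_n X_n$, $|x|:=n$ for $x\in X_n$, $B(x):=B(\xi_x,2^{-n})$. $\mathcal I^s_{p,q}(X)$: sequences $u:X\to\mathbb C$ with $\|u\|_{\mathcal I^s_{p,q}(X)} := \big(\sum_{k\in\mathbb Z}2^{ksq}\|\sum_{x\in X_k}|u(x)|\chi_{B(x)}\|_{L^p(Z)}^q\big)^{1/q}<\infty$ (usual modification for $p$ or $q=\infty$). *)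

theory Defs
  imports "HOL-Analysis.Analysis" "HOL-Probability.Essential_Supremum"
begin

definition separated :: "real \<Rightarrow> 'a::metric_space set \<Rightarrow> bool" where
  "separated \<delta> A \<longleftrightarrow> (\<forall>a\<in>A. \<forall>b\<in>A. a \<noteq> b \<longrightarrow> \<delta> \<le> dist a b)"

definition maximal_separated :: "real \<Rightarrow> 'a::metric_space set \<Rightarrow> bool" where
  "maximal_separated \<delta> A \<longleftrightarrow> separated \<delta> A \<and> (\<forall>B. A \<subseteq> B \<and> separated \<delta> B \<longrightarrow> B = A)"

(* Vertex set X of the hyperbolic filling: a vertex x is a pair (n, xi_x) with xi_x in S n;
   |x| = fst x, xi_x = snd x *)
definition filling :: "(int \<Rightarrow> 'a set) \<Rightarrow> (int \<times> 'a) set" where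
  "filling S = Sigma UNIV S"

definition vball :: "int \<times> 'a::metric_space \<Rightarrow> 'a set" where
  "vball x = ball (snd x) (2 powr (- real_of_int (fst x)))"

(* x powr a on [0,\<infinity>], used only with a > 0 *)
definition epowr :: "ennreal \<Rightarrow> real \<Rightarrow> ennreal" where
  "epowr x a = (if x = top then top else ennreal (enn2real x powr a))"

definition Lp_qnorm :: "'a measure \<Rightarrow> ennreal \<Rightarrow> ('a \<Rightarrow> ennreal) \<Rightarrow> ennreal" where
  "Lp_qnorm M p f = (if p = top then esssup M f
     else epowr (\<integral>\<^sup>+ z. epowr (f z) (enn2real p) \<partial>M) (1 / enn2real p))"

definition level_fun :: "(int \<Rightarrow> 'a::metric_space set) \<Rightarrow> (int \<times> 'a \<Rightarrow> complex) \<Rightarrow> int \<Rightarrow> 'a \<Rightarrow> ennreal" where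
  "level_fun S u k = (\<lambda>z. \<integral>\<^sup>+ \<xi>. ennreal (cmod (u (k, \<xi>))) * indicator (vball (k, \<xi>)) z \<partial>count_space (S k))"

definition I_norm :: "'a::metric_space measure \<Rightarrow> (int \<Rightarrow> 'a set) \<Rightarrow> real \<Rightarrow> ennreal \<Rightarrow> ennreal
    \<Rightarrow> (int \<times> 'a \<Rightarrow> complex) \<Rightarrow> ennreal" where
  "I_norm M S s p q u =
     (let a = (\<lambda>k. Lp_qnorm M p (level_fun S u k)) in
      if q = top then (SUP k. ennreal (2 powr (real_of_int k * s)) * a k)
      else epowr (\<integral>\<^sup>+ k. ennreal (2 powr (real_of_int k * s * enn2real q)) * epowr (a k) (enn2real q)
                    \<partial>count_space UNIV) (1 / enn2real q))"

definition Tnbhd :: "(int \<Rightarrow> 'a::metric_space set) \<Rightarrow> int \<times> 'a \<Rightarrow> (int \<times> 'a) set" where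
  "Tnbhd S x = {y \<in> filling S. fst x \<le> fst y \<and> vball y \<inter> vball x \<noteq> {}}"

definition Tterm :: "'a::metric_space measure \<Rightarrow> (int \<times> 'a \<Rightarrow> complex) \<Rightarrow> int \<times> 'a \<Rightarrow> int \<times> 'a \<Rightarrow> complex" where
  "Tterm M u x y = complex_of_real (measure M (vball y) / measure M (vball x)) * u y"

(* Tu(x) (set to 0 off X, irrelevant for the norm) *)
definition T_op :: "'a::metric_space measure \<Rightarrow> (int \<Rightarrow> 'a set) \<Rightarrow> (int \<times> 'a \<Rightarrow> complex) \<Rightarrow> int \<times> 'a \<Rightarrow> complex" where
  "T_op M S u x = (if x \<in> filling S then infsum (Tterm M u x) (Tnbhd S x) else 0)"

end

theory Submission
  imports Defs
begin

lemma epowr_ennreal: "0 \<le> x \<Longrightarrow> epowr (ennreal x) a = ennreal (x powr a)"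
  by (simp add: epowr_def)

lemma epowr_top[simp]: "epowr top a = top"
  by (simp add: epowr_def)

lemma epowr_zero[simp]: "epowr 0 a = 0"
  by (simp add: epowr_def)

lemma epowr_one[simp]: "epowr x 1 = x"
  by (cases x) (auto simp: epowr_def)

lemma epowr_mono: assumes "x \<le> y" "0 \<le> a" shows "epowr x a \<le> epowr y a"
proof (cases "y = top")
  case True then show ?thesis by simp
next
  case False
  then have "x \<noteq> top" using assms top_unique by auto
  with False assms show ?thesis
    by (auto simp: epowr_def less_top[symmetric] intro!: ennreal_leI powr_mono2 enn2real_mono)
qed

lemma epowr_epowr: assumes "0 < a" shows "epowr (epowr x a) b = epowr x (a * b)"
proof (cases "x = top")
  case False
  then show ?thesis by (simp add: epowr_def powr_powr)
qed simp

lemma epowr_inv: assumes "0 < a" shows "epowr (epowr x a) (1/a) = x"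
  using assms by (simp add: epowr_epowr)

lemma epowr_inv': assumes "0 < a" shows "epowr (epowr x (1/a)) a = x"
  using assms by (simp add: epowr_epowr)

lemma epowr_mult: "epowr (x * y) a = epowr x a * epowr y a"
proof (cases "x = top \<or> y = top")
  case True
  then show ?thesis
  proof
    assume x: "x = top"
    show ?thesis
    proof (cases "y = 0")
      case False
      then have "epowr y a \<noteq> 0"
        by (cases "y = top") (auto simp: epowr_def enn2real_eq_0_iff)
      then show ?thesis using x False by (simp add: ennreal_top_mult)
    qed (simp add: x)
  next
    assume y: "y = top"
    show ?thesis
    proof (cases "x = 0")
      case False
      then have "epowr x a \<noteq> 0"
        by (cases "x = top") (auto simp: epowr_def enn2real_eq_0_iff)
      then show ?thesis using y False by (simp add: ennreal_mult_top)
    qed (simp add: y)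
  qed
next
  case False
  then obtain x' y' where "x = ennreal x'" "y = ennreal y'" "0 \<le> x'" "0 \<le> y'"
    by (metis ennreal_cases top.not_eq_extremum)
  then show ?thesis
    by (simp add: epowr_ennreal ennreal_mult[symmetric] powr_mult)
qed

lemma epowr_le_iff: assumes "0 < a" shows "epowr x a \<le> epowr y a \<longleftrightarrow> x \<le> y"
proof
  assume "epowr x a \<le> epowr y a"
  from epowr_mono[OF this, of "1/a"] assms show "x \<le> y" by (simp add: epowr_inv)
qed (use epowr_mono assms in auto)

lemma epowr_less_top: "x < top \<Longrightarrow> epowr x a < top"
  by (simp add: epowr_def)

lemma epowr_eq_top_iff: "epowr x a = top \<longleftrightarrow> x = top"
  by (simp add: epowr_def)

lemma epowr_powr_ennreal: "0 \<le> c \<Longrightarrow> epowr (ennreal c) a = ennreal (c powr a)"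
  by (rule epowr_ennreal)

lemma count_le_integral: "j \<in> I \<Longrightarrow> f j \<le> (\<integral>\<^sup>+i. f i \<partial>count_space I)"
  by (rule nn_integral_ge_point)

lemma weighted_sum_le:
  fixes w f :: "'i \<Rightarrow> ennreal"
  assumes b: "0 < b"
  shows "(\<integral>\<^sup>+j. w j * f j \<partial>count_space I)
     \<le> (\<integral>\<^sup>+j. w j \<partial>count_space I) * epowr (\<integral>\<^sup>+i. epowr (f i) b \<partial>count_space I) (1/b)"
proof -
  let ?\<Phi> = "epowr (\<integral>\<^sup>+i. epowr (f i) b \<partial>count_space I) (1/b)"
  have "(\<integral>\<^sup>+j. w j * f j \<partial>count_space I) \<le> (\<integral>\<^sup>+j. w j * ?\<Phi> \<partial>count_space I)"
  proof (rule nn_integral_mono)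
    fix j assume "j \<in> space (count_space I)"
    then have j: "j \<in> I" by simp
    have "f j = epowr (epowr (f j) b) (1/b)" using b by (simp add: epowr_inv)
    also have "\<dots> \<le> ?\<Phi>"
      by (rule epowr_mono[OF count_le_integral[OF j]]) (use b in auto)
    finally show "w j * f j \<le> w j * ?\<Phi>" by (rule mult_left_mono) auto
  qed
  also have "\<dots> = (\<integral>\<^sup>+j. w j \<partial>count_space I) * ?\<Phi>"
    by (rule nn_integral_multc) simp
  finally show ?thesis .
qed


definition GS :: "real \<Rightarrow> nat \<Rightarrow> real" where
  "GS c m = 2 powr (real m * c) / (1 - 2 powr (- c))"

lemma GS_pos: "0 < c \<Longrightarrow> 0 < GS c m"
  unfolding GS_def by (auto intro!: divide_pos_pos simp: powr_minus_divide)

lemma geom_sum_ennreal: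
  assumes c: "0 < c"
  shows "(\<Sum>n. ennreal (2 powr (real m * c) * (2 powr (- c)) ^ n)) = ennreal (GS c m)"
proof -
  have lt: "norm (2 powr (- c)) < (1::real)" using c by (simp add: powr_minus_divide)
  have "(\<lambda>n. 2 powr (real m * c) * (2 powr (- c)) ^ n) sums (2 powr (real m * c) * (1 / (1 - 2 powr (- c))))"
    by (rule sums_mult[OF geometric_sums[OF lt]])
  then show ?thesis unfolding GS_def
    by (subst suminf_ennreal_eq) auto
qed

lemma geom_up:
  assumes c: "0 < c"
  shows "(\<integral>\<^sup>+j. ennreal (2 powr (- c * real_of_int (j - k))) \<partial>count_space {k - int m..}) = ennreal (GS c m)"
proof -
  have bij: "bij_betw (\<lambda>n::nat. k - int m + int n) UNIV {k - int m..}"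
    by (rule bij_betwI[where g="\<lambda>j. nat (j - (k - int m))"]) auto
  have "(\<integral>\<^sup>+j. ennreal (2 powr (- c * real_of_int (j - k))) \<partial>count_space {k - int m..})
      = (\<integral>\<^sup>+n. ennreal (2 powr (- c * real_of_int ((k - int m + int n) - k))) \<partial>count_space UNIV)"
    by (rule nn_integral_bij_count_space[OF bij, symmetric])
  also have "\<dots> = (\<Sum>n. ennreal (2 powr (real m * c) * (2 powr (- c)) ^ n))"
    by (subst nn_integral_count_space_nat)
      (auto intro!: suminf_cong arg_cong[where f=ennreal] simp: powr_realpow[symmetric] powr_powr powr_add[symmetric] algebra_simps)
  finally show ?thesis using geom_sum_ennreal[OF c] by simp
qed

lemma geom_down:
  assumes c: "0 < c"
  shows "(\<integral>\<^sup>+k. ennreal (2 powr (- c * real_of_int (j - k))) \<partial>count_space {..j + int m}) = ennreal (GS c m)"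
proof -
  have bij: "bij_betw (\<lambda>n::nat. j + int m - int n) UNIV {..j + int m}"
    by (rule bij_betwI[where g="\<lambda>k. nat (j + int m - k)"]) auto
  have "(\<integral>\<^sup>+k. ennreal (2 powr (- c * real_of_int (j - k))) \<partial>count_space {..j + int m})
      = (\<integral>\<^sup>+n. ennreal (2 powr (- c * real_of_int (j - (j + int m - int n)))) \<partial>count_space UNIV)"
    by (rule nn_integral_bij_count_space[OF bij, symmetric])
  also have "\<dots> = (\<Sum>n. ennreal (2 powr (real m * c) * (2 powr (- c)) ^ n))"
    by (subst nn_integral_count_space_nat)
      (auto intro!: suminf_cong arg_cong[where f=ennreal] simp: powr_realpow[symmetric] powr_powr powr_add[symmetric] algebra_simps)
  finally show ?thesis using geom_sum_ennreal[OF c] by simp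
qed


definition Jn :: "real \<Rightarrow> ennreal \<Rightarrow> (int \<Rightarrow> ennreal) \<Rightarrow> ennreal" where
  "Jn s q a = (if q = top then (SUP k. ennreal (2 powr (real_of_int k * s)) * a k)
      else epowr (\<integral>\<^sup>+ k. ennreal (2 powr (real_of_int k * s * enn2real q)) * epowr (a k) (enn2real q)
                    \<partial>count_space UNIV) (1 / enn2real q))"

lemma epowr_scale: "epowr (ennreal (2 powr x) * a) r = ennreal (2 powr (x * r)) * epowr a r"
  by (simp add: epowr_mult epowr_ennreal powr_powr)

definition HK :: "real \<Rightarrow> ennreal \<Rightarrow> real \<Rightarrow> real \<Rightarrow> real \<Rightarrow> nat \<Rightarrow> real" where
  "HK s q P K \<rho> m = (if q = top then (K * GS (s * P - \<rho>) m) powr (1/P)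
     else ((K * GS ((s * P - \<rho>)/2) m) powr (enn2real q / P) * GS ((s * P - \<rho>) * (enn2real q / P) / 2) m) powr (1 / enn2real q))"

lemma HK_nonneg: "0 \<le> HK s q P K \<rho> m" by (simp add: HK_def)

lemma hardy:
  fixes a a' :: "int \<Rightarrow> ennreal" and P s K \<rho> :: real and m :: nat and q :: ennreal
  assumes P: "0 < P" and K: "0 \<le> K" and \<rho>: "\<rho> < s * P" and q: "0 < q"
    and hyp: "\<And>k. epowr (a' k) P \<le> ennreal K *
        (\<integral>\<^sup>+ j. ennreal (2 powr (real_of_int (j - k) * \<rho>)) * epowr (a j) P \<partial>count_space {k - int m..})"
  shows "Jn s q a' \<le> ennreal (HK s q P K \<rho> m) * Jn s q a"
proof -
  define e where "e = s * P - \<rho>"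
  have e: "0 < e" using \<rho> by (simp add: e_def)
  define b where "b j = ennreal (2 powr (real_of_int j * s)) * a j" for j
  have key: "epowr (ennreal (2 powr (real_of_int k * s)) * a' k) P \<le> ennreal K *
      (\<integral>\<^sup>+ j. ennreal (2 powr (- e * real_of_int (j - k))) * epowr (b j) P \<partial>count_space {k - int m..})" for k
  proof -
    have "epowr (ennreal (2 powr (real_of_int k * s)) * a' k) P
        = ennreal (2 powr (real_of_int k * s * P)) * epowr (a' k) P" by (rule epowr_scale)
    also have "\<dots> \<le> ennreal (2 powr (real_of_int k * s * P)) * (ennreal K *
        (\<integral>\<^sup>+ j. ennreal (2 powr (real_of_int (j - k) * \<rho>)) * epowr (a j) P \<partial>count_space {k - int m..}))"
      by (rule mult_left_mono[OF hyp]) simp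
    also have "\<dots> = ennreal K * (\<integral>\<^sup>+ j. ennreal (2 powr (real_of_int k * s * P)) *
        (ennreal (2 powr (real_of_int (j - k) * \<rho>)) * epowr (a j) P) \<partial>count_space {k - int m..})"
      by (subst nn_integral_cmult) (auto simp: mult_ac)
    also have "\<dots> = ennreal K *
      (\<integral>\<^sup>+ j. ennreal (2 powr (- e * real_of_int (j - k))) * epowr (b j) P \<partial>count_space {k - int m..})"
    proof -
      have "ennreal (2 powr (real_of_int k * s * P)) * (ennreal (2 powr (real_of_int (j - k) * \<rho>)) * epowr (a j) P)
          = ennreal (2 powr (- e * real_of_int (j - k))) * epowr (b j) P" for j
      proof -
        have "2 powr (real_of_int k * s * P) * 2 powr (real_of_int (j - k) * \<rho>)
            = 2 powr (- e * real_of_int (j - k)) * (2::real) powr (real_of_int j * s * P)"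
          by (simp add: powr_add[symmetric] e_def algebra_simps)
        then show ?thesis
          by (simp add: b_def epowr_scale mult.assoc[symmetric] ennreal_mult[symmetric])
      qed
      then show ?thesis by simp
    qed
    finally show ?thesis .
  qed
  show ?thesis
  proof (cases "q = top")
    case True
    define B where "B = (SUP j. b j)"
    define G where "G = GS e m"
    have G: "0 < G" using GS_pos[OF e] by (simp add: G_def)
    have "ennreal (2 powr (real_of_int k * s)) * a' k \<le> ennreal ((K * G) powr (1/P)) * B" for k
    proof -
      have "epowr (ennreal (2 powr (real_of_int k * s)) * a' k) P \<le> ennreal K *
        (\<integral>\<^sup>+ j. ennreal (2 powr (- e * real_of_int (j - k))) * epowr B P \<partial>count_space {k - int m..})"
        by (rule order_trans[OF key]) (auto intro!: mult_left_mono nn_integral_mono epowr_mono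
            simp: B_def SUP_upper P less_imp_le)
      also have "\<dots> = ennreal K * (ennreal G * epowr B P)"
        by (subst nn_integral_multc) (simp, simp only: geom_up[OF e] G_def)
      also have "\<dots> = epowr (ennreal ((K * G) powr (1/P)) * B) P"
        using K G P by (simp add: epowr_mult epowr_ennreal powr_powr ennreal_mult mult.assoc)
      finally show ?thesis using epowr_le_iff[OF P] by blast
    qed
    then have "Jn s q a' \<le> ennreal ((K * G) powr (1/P)) * B"
      using True by (simp add: Jn_def SUP_least)
    then show ?thesis using True by (simp add: Jn_def B_def b_def HK_def G_def e_def)
  next
    case False
    define r where "r = enn2real q"
    have r: "0 < r" using q False by (simp add: r_def enn2real_positive_iff less_top[symmetric])
    define \<beta> where "\<beta> = r / P"
    have \<beta>: "0 < \<beta>" using r P by (simp add: \<beta>_def)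
    define W where "W = GS (e/2) m"
    have W: "0 < W" using GS_pos e by (simp add: W_def)
    define G where "G = GS (e * \<beta> / 2) m"
    have G: "0 < G" using GS_pos e \<beta> by (simp add: G_def)
    define h where "h k j = ennreal (2 powr (- (e * \<beta> / 2) * real_of_int (j - k))) * epowr (b j) r" for k j
    have step: "epowr (ennreal (2 powr (real_of_int k * s)) * a' k) r \<le>
        ennreal ((K * W) powr \<beta>) * (\<integral>\<^sup>+ j. h k j \<partial>count_space {k - int m..})" for k
    proof -
      have "(\<integral>\<^sup>+ j. ennreal (2 powr (- e * real_of_int (j - k))) * epowr (b j) P \<partial>count_space {k - int m..})
          = (\<integral>\<^sup>+ j. ennreal (2 powr (- (e/2) * real_of_int (j - k))) *
               (ennreal (2 powr (- (e/2) * real_of_int (j - k))) * epowr (b j) P) \<partial>count_space {k - int m..})"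
        by (intro nn_integral_cong) (simp add: mult.assoc[symmetric] ennreal_mult[symmetric] powr_add[symmetric])
      also have "\<dots> \<le> ennreal W * epowr (\<integral>\<^sup>+ j. epowr (ennreal (2 powr (- (e/2) * real_of_int (j - k))) * epowr (b j) P) \<beta>
                     \<partial>count_space {k - int m..}) (1/\<beta>)"
        using weighted_sum_le[OF \<beta>, where w="\<lambda>j. ennreal (2 powr (- (e/2) * real_of_int (j - k)))"
            and f="\<lambda>j. ennreal (2 powr (- (e/2) * real_of_int (j - k))) * epowr (b j) P" and I="{k - int m..}"]
        unfolding geom_up[of "e/2", OF half_gt_zero[OF e]] W_def .
      also have "(\<integral>\<^sup>+ j. epowr (ennreal (2 powr (- (e/2) * real_of_int (j - k))) * epowr (b j) P) \<beta>
                     \<partial>count_space {k - int m..}) = (\<integral>\<^sup>+ j. h k j \<partial>count_space {k - int m..})"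
      proof (intro nn_integral_cong)
        fix j
        have "epowr (ennreal (2 powr (- (e/2) * real_of_int (j - k))) * epowr (b j) P) \<beta>
            = ennreal (2 powr (- (e/2) * real_of_int (j - k) * \<beta>)) * epowr (b j) (P * \<beta>)"
          by (simp add: epowr_scale epowr_epowr[OF P])
        also have "P * \<beta> = r" using P by (simp add: \<beta>_def)
        also have "- (e/2) * real_of_int (j - k) * \<beta> = - (e * \<beta> / 2) * real_of_int (j - k)" by simp
        finally show "epowr (ennreal (2 powr (- (e/2) * real_of_int (j - k))) * epowr (b j) P) \<beta> = h k j"
          by (simp add: h_def)
      qed
      finally have *: "epowr (ennreal (2 powr (real_of_int k * s)) * a' k) P \<le>
          ennreal K * (ennreal W * epowr (\<integral>\<^sup>+ j. h k j \<partial>count_space {k - int m..}) (1/\<beta>))"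
        using key[of k] by (meson dual_order.trans mult_left_mono zero_le)
      have "epowr (ennreal (2 powr (real_of_int k * s)) * a' k) r
          = epowr (epowr (ennreal (2 powr (real_of_int k * s)) * a' k) P) \<beta>"
        using P by (simp add: epowr_epowr \<beta>_def)
      also have "\<dots> \<le> epowr (ennreal K * (ennreal W * epowr (\<integral>\<^sup>+ j. h k j \<partial>count_space {k - int m..}) (1/\<beta>))) \<beta>"
        by (rule epowr_mono[OF *]) (use \<beta> in simp)
      also have "\<dots> = ennreal ((K * W) powr \<beta>) * (\<integral>\<^sup>+ j. h k j \<partial>count_space {k - int m..})"
        using K W \<beta> by (simp add: epowr_mult epowr_ennreal epowr_epowr powr_mult ennreal_mult mult.assoc)
      finally show ?thesis .
    qed
    have "(\<integral>\<^sup>+ k. epowr (ennreal (2 powr (real_of_int k * s)) * a' k) r \<partial>count_space UNIV)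
        \<le> (\<integral>\<^sup>+ k. ennreal ((K * W) powr \<beta>) * (\<integral>\<^sup>+ j. h k j \<partial>count_space {k - int m..}) \<partial>count_space UNIV)"
      by (rule nn_integral_mono) (rule step)
    also have "\<dots> = ennreal ((K * W) powr \<beta>) * (\<integral>\<^sup>+ k. \<integral>\<^sup>+ j. h k j * indicator {k - int m..} j \<partial>count_space UNIV \<partial>count_space UNIV)"
      by (subst nn_integral_cmult) (auto simp: nn_integral_count_space_indicator)
    also have "(\<integral>\<^sup>+ k. \<integral>\<^sup>+ j. h k j * indicator {k - int m..} j \<partial>count_space UNIV \<partial>count_space UNIV)
        = (\<integral>\<^sup>+ j. \<integral>\<^sup>+ k. h k j * indicator {..j + int m} k \<partial>count_space UNIV \<partial>count_space UNIV)"
    proof -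
      have "(\<integral>\<^sup>+ k. \<integral>\<^sup>+ j. h k j * indicator {k - int m..} j \<partial>count_space UNIV \<partial>count_space UNIV)
          = (\<integral>\<^sup>+ j. \<integral>\<^sup>+ k. h k j * indicator {k - int m..} j \<partial>count_space UNIV \<partial>count_space UNIV)"
        by (rule nn_integral_count_space_nn_integral[symmetric]) auto
      also have "\<dots> = (\<integral>\<^sup>+ j. \<integral>\<^sup>+ k. h k j * indicator {..j + int m} k \<partial>count_space UNIV \<partial>count_space UNIV)"
        by (intro nn_integral_cong) (auto simp: indicator_def)
      finally show ?thesis .
    qed
    also have "\<dots> = (\<integral>\<^sup>+ j. ennreal G * epowr (b j) r \<partial>count_space UNIV)"
    proof (intro nn_integral_cong)
      fix j
      have "(\<integral>\<^sup>+ k. h k j * indicator {..j + int m} k \<partial>count_space UNIV)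
          = (\<integral>\<^sup>+ k. ennreal (2 powr (- (e * \<beta> / 2) * real_of_int (j - k))) * epowr (b j) r \<partial>count_space {..j + int m})"
        by (simp add: nn_integral_count_space_indicator h_def)
      also have "\<dots> = ennreal G * epowr (b j) r"
        using geom_down[of "e * \<beta> / 2" j m] e \<beta> by (subst nn_integral_multc) (auto simp: G_def)
      finally show "(\<integral>\<^sup>+ k. h k j * indicator {..j + int m} k \<partial>count_space UNIV) = ennreal G * epowr (b j) r" .
    qed
    also have "\<dots> = ennreal G * (\<integral>\<^sup>+ j. epowr (b j) r \<partial>count_space UNIV)"
      by (rule nn_integral_cmult) simp
    finally have main: "(\<integral>\<^sup>+ k. epowr (ennreal (2 powr (real_of_int k * s)) * a' k) r \<partial>count_space UNIV)
        \<le> ennreal ((K * W) powr \<beta> * G) * (\<integral>\<^sup>+ j. epowr (b j) r \<partial>count_space UNIV)"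
      using K W G by (simp add: ennreal_mult mult.assoc)
    have eqJ: "Jn s q f = epowr (\<integral>\<^sup>+ k. epowr (ennreal (2 powr (real_of_int k * s)) * f k) r \<partial>count_space UNIV) (1/r)" for f
      using False by (simp add: Jn_def r_def epowr_scale)
    have "Jn s q a' \<le> epowr (ennreal ((K * W) powr \<beta> * G) * (\<integral>\<^sup>+ j. epowr (b j) r \<partial>count_space UNIV)) (1/r)"
      unfolding eqJ by (rule epowr_mono[OF main]) (use r in simp)
    also have "\<dots> = ennreal (((K * W) powr \<beta> * G) powr (1/r)) * Jn s q a"
      unfolding eqJ b_def using K W G by (simp add: epowr_mult epowr_ennreal)
    finally show ?thesis using False by (simp add: HK_def W_def G_def e_def \<beta>_def r_def mult.assoc)
  qed
qed


locale hf =
  fixes M :: "'a::metric_space measure" and S :: "int \<Rightarrow> 'a set" and C Q :: real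
  assumes borel: "sets M = sets borel"
    and balls: "\<forall>\<xi> r. 0 < r \<longrightarrow> 0 < emeasure M (ball \<xi> r) \<and> emeasure M (ball \<xi> r) < \<infinity>"
    and C: "1 \<le> C" and Q: "0 < Q"
    and doubling: "\<forall>\<xi> r t. 0 < r \<and> 1 \<le> t \<longrightarrow>
        measure M (ball \<xi> (t * r)) \<le> C * t powr Q * measure M (ball \<xi> r)"
    and sep: "\<And>n. separated (2 powr (- real_of_int n - 1)) (S n)"
begin

lemma open_sets: "open A \<Longrightarrow> A \<in> sets M"
  using borel by (simp add: borel_open)

lemma ball_sets[measurable]: "ball x r \<in> sets M"
  by (rule open_sets) simp

lemma space_M[simp]: "space M = UNIV"
  using sets_eq_imp_space_eq[OF borel] by simp

lemma emeasure_ball_fin: "emeasure M (ball x r) < \<infinity>"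
  using balls by (cases "0 < r") (auto simp: ball_empty)

lemma ball_fmeasurable: "ball x r \<in> fmeasurable M"
  using emeasure_ball_fin by (auto simp: fmeasurable_def)

lemma emeasure_ball: "emeasure M (ball x r) = ennreal (measure M (ball x r))"
  by (rule emeasure_eq_ennreal_measure) (use emeasure_ball_fin[of x r] in auto)

lemma mu_pos: "0 < r \<Longrightarrow> 0 < measure M (ball x r)"
  using balls emeasure_ball by (metis ennreal_less_zero_iff)

lemma mu_mono: "A \<subseteq> ball x r \<Longrightarrow> A \<in> sets M \<Longrightarrow> measure M A \<le> measure M (ball x r)"
  by (rule measure_mono_fmeasurable[OF _ _ ball_fmeasurable])

lemma dbl: assumes "0 < r" "r \<le> R'" "ball a R \<subseteq> ball b R'"
  shows "measure M (ball a R) \<le> C * (R'/r) powr Q * measure M (ball b r)"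
proof -
  have "measure M (ball a R) \<le> measure M (ball b R')" by (rule mu_mono[OF assms(3)]) simp
  also have "ball b R' = ball b ((R'/r) * r)" using assms by simp
  also have "measure M \<dots> \<le> C * (R'/r) powr Q * measure M (ball b r)"
    using doubling[rule_format, of r "R'/r" b] assms by simp
  finally show ?thesis .
qed

lemma dbl2: assumes "0 < r" "r \<le> R + dist a b"
  shows "measure M (ball a R) \<le> C * ((R + dist a b)/r) powr Q * measure M (ball b r)"
  by (rule dbl[OF assms]) (auto simp: ball_def, smt (verit) dist_triangle dist_commute)

lemma dbl3: assumes "0 < r" "r \<le> L" "R + dist a b \<le> L"
  shows "measure M (ball a R) \<le> C * (L/r) powr Q * measure M (ball b r)"
  by (rule dbl[OF assms(1,2)]) (use assms(3) in \<open>auto simp: ball_def, smt (verit) dist_triangle dist_commute\<close>)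

lemma counting:
  fixes A :: "'a set"
  assumes \<delta>: "0 < \<delta>" and A: "separated \<delta> A" and R: "0 < R"
  shows "finite (A \<inter> ball z R) \<and> real (card (A \<inter> ball z R)) \<le> C * ((4*R + \<delta>)/\<delta>) powr Q"
proof -
  define N where "N = C * ((4*R + \<delta>)/\<delta>) powr Q"
  have N: "0 < N" using C \<delta> R by (simp add: N_def)
  define R' where "R' = R + \<delta>/2"
  have mz: "0 < measure M (ball z R')" using R \<delta> by (intro mu_pos) (simp add: R'_def)
  have each: "measure M (ball z R') \<le> N * measure M (ball \<xi> (\<delta>/2))" if "\<xi> \<in> ball z R" for \<xi>
  proof -
    have "measure M (ball z R') \<le> C * ((2*R + \<delta>/2)/(\<delta>/2)) powr Q * measure M (ball \<xi> (\<delta>/2))"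
    proof (rule dbl3)
      show "R' + dist z \<xi> \<le> 2*R + \<delta>/2" using that R \<delta> by (simp add: R'_def field_simps)
    qed (use R \<delta> in \<open>auto simp: field_simps\<close>)
    also have "(2*R + \<delta>/2)/(\<delta>/2) = (4*R + \<delta>)/\<delta>" using \<delta> by (simp add: field_simps)
    finally show ?thesis by (simp add: N_def)
  qed
  have bound: "real (card F) \<le> N" if F: "finite F" "F \<subseteq> A \<inter> ball z R" for F
  proof -
    have disj: "disjoint_family_on (\<lambda>\<xi>. ball \<xi> (\<delta>/2)) F"
    unfolding disjoint_family_on_def
    proof (intro ballI impI)
      fix \<xi> \<eta> assume "\<xi> \<in> F" "\<eta> \<in> F" "\<xi> \<noteq> \<eta>"
      then have "\<delta> \<le> dist \<xi> \<eta>" using A F unfolding separated_def by auto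
      show "ball \<xi> (\<delta>/2) \<inter> ball \<eta> (\<delta>/2) = {}"
      proof (rule ccontr)
        assume "ball \<xi> (\<delta>/2) \<inter> ball \<eta> (\<delta>/2) \<noteq> {}"
        then obtain w where "dist \<xi> w < \<delta>/2" "dist \<eta> w < \<delta>/2" by auto
        moreover have "dist \<xi> \<eta> \<le> dist \<xi> w + dist \<eta> w" by (metis dist_commute dist_triangle)
        ultimately show False using \<open>\<delta> \<le> dist \<xi> \<eta>\<close> by linarith
      qed
    qed
    have "real (card F) * measure M (ball z R') = (\<Sum>\<xi>\<in>F. measure M (ball z R'))" by simp
    also have "\<dots> \<le> (\<Sum>\<xi>\<in>F. N * measure M (ball \<xi> (\<delta>/2)))"
      using F by (intro sum_mono each) auto
    also have "\<dots> = N * measure M (\<Union>\<xi>\<in>F. ball \<xi> (\<delta>/2))"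
      using F disj emeasure_ball_fin by (subst measure_finite_Union) (auto simp: sum_distrib_left less_top)
    also have "\<dots> \<le> N * measure M (ball z R')"
    proof -
      have "(\<Union>\<xi>\<in>F. ball \<xi> (\<delta>/2)) \<subseteq> ball z R'"
      proof
        fix w assume "w \<in> (\<Union>\<xi>\<in>F. ball \<xi> (\<delta>/2))"
        then obtain \<xi> where "\<xi> \<in> F" "dist \<xi> w < \<delta>/2" by auto
        moreover have "dist z \<xi> < R" using F \<open>\<xi> \<in> F\<close> by auto
        moreover have "dist z w \<le> dist z \<xi> + dist \<xi> w" by (rule dist_triangle)
        ultimately show "w \<in> ball z R'" by (simp add: R'_def)
      qed
      then show ?thesis using N by (intro mult_left_mono mu_mono) (auto intro: open_sets)
    qed
    finally show ?thesis using mz by simp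
  qed
  have fin: "finite (A \<inter> ball z R)"
  proof (rule ccontr)
    assume "infinite (A \<inter> ball z R)"
    then obtain F where "F \<subseteq> A \<inter> ball z R" "finite F" "card F = nat (ceiling N) + 1"
      using infinite_arbitrarily_large by blast
    with bound[of F] show False by linarith
  qed
  show ?thesis using fin bound[OF fin] by (simp add: N_def)
qed

end


lemma measurable_count_sum:
  fixes f :: "'i \<Rightarrow> 'b \<Rightarrow> ennreal"
  assumes I: "countable I" and f: "\<And>i. i \<in> I \<Longrightarrow> f i \<in> borel_measurable N"
  shows "(\<lambda>z. \<integral>\<^sup>+i. f i z \<partial>count_space I) \<in> borel_measurable N"
proof (cases "finite I")
  case True
  then show ?thesis using f by (simp add: nn_integral_count_space_finite)
next
  case False
  note bij = bij_betw_from_nat_into[OF I False]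
  have eq: "(\<integral>\<^sup>+i. f i z \<partial>count_space I) = (\<Sum>n. f (from_nat_into I n) z)" for z
    by (simp add: nn_integral_bij_count_space[symmetric, OF bij] nn_integral_count_space_nat)
  have "from_nat_into I n \<in> I" for n using False by (metis bij bij_betwE UNIV_I)
  then show ?thesis unfolding eq using f by measurable
qed

lemma powr_superadd:
  fixes b :: "'i \<Rightarrow> real"
  assumes "finite A" "\<And>i. i \<in> A \<Longrightarrow> 0 \<le> b i" "1 \<le> P"
  shows "(\<Sum>i\<in>A. b i powr P) \<le> (\<Sum>i\<in>A. b i) powr P"
proof -
  define T where "T = (\<Sum>i\<in>A. b i)"
  have T: "0 \<le> T" using assms by (simp add: T_def sum_nonneg)
  have bi: "b i \<le> T" if "i \<in> A" for i
    unfolding T_def using assms that by (intro member_le_sum) auto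
  have "(\<Sum>i\<in>A. b i powr P) \<le> (\<Sum>i\<in>A. b i * T powr (P - 1))"
  proof (rule sum_mono)
    fix i assume i: "i \<in> A"
    show "b i powr P \<le> b i * T powr (P - 1)"
    proof (cases "b i = 0")
      case False
      then have "b i powr P = b i * b i powr (P - 1)" using assms i
        by (simp add: powr_diff)  
      also have "\<dots> \<le> b i * T powr (P - 1)"
        using assms i bi False by (intro mult_left_mono powr_mono2) auto
      finally show ?thesis .
    qed (use assms in simp)
  qed
  also have "\<dots> = T * T powr (P - 1)" by (simp add: T_def sum_distrib_right)
  also have "\<dots> = T powr P"
    using T assms by (cases "T = 0") (auto simp: powr_diff)
  finally show ?thesis by (simp add: T_def)
qed

lemma powr_subadd:
  fixes b :: "'i \<Rightarrow> real"
  assumes "finite A" "\<And>i. i \<in> A \<Longrightarrow> 0 \<le> b i" "0 < P" "P \<le> 1"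
  shows "(\<Sum>i\<in>A. b i) powr P \<le> (\<Sum>i\<in>A. b i powr P)"
proof -
  define T where "T = (\<Sum>i\<in>A. b i)"
  have T: "0 \<le> T" using assms by (simp add: T_def sum_nonneg)
  have bi: "b i \<le> T" if "i \<in> A" for i
    unfolding T_def using assms that by (intro member_le_sum) auto
  show ?thesis
  proof (cases "T = 0")
    case True then show ?thesis using assms by (simp add: T_def sum_nonneg)
  next
    case False
    then have Tp: "0 < T" using T by simp
    have "(\<Sum>i\<in>A. b i * T powr (P - 1)) = T * T powr (P - 1)" by (simp add: T_def sum_distrib_right)
    also have "\<dots> = T powr P" using Tp by (simp add: powr_diff)
    finally have "T powr P = (\<Sum>i\<in>A. b i * T powr (P - 1))" by simp
    also have "\<dots> \<le> (\<Sum>i\<in>A. b i powr P)"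
    proof (rule sum_mono)
      fix i assume i: "i \<in> A"
      show "b i * T powr (P - 1) \<le> b i powr P"
      proof (cases "b i = 0")
        case False
        then have bp: "0 < b i" using assms i by (simp add: less_le)
        have "b i * T powr (P - 1) \<le> b i * b i powr (P - 1)"
          using assms bp bi i by (intro mult_left_mono powr_mono2') auto
        also have "\<dots> = b i powr P" using bp by (simp add: powr_diff)
        finally show ?thesis .
      qed simp
    qed
    finally show ?thesis by (simp add: T_def)
  qed
qed

lemma powr_crude:
  fixes b :: "'i \<Rightarrow> real"
  assumes "finite A" "\<And>i. i \<in> A \<Longrightarrow> 0 \<le> b i" "0 < P"
  shows "(\<Sum>i\<in>A. b i) powr P \<le> real (card A) powr P * (\<Sum>i\<in>A. b i powr P)"
proof -
  define T where "T = (\<Sum>i\<in>A. b i powr P)"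
  have T: "0 \<le> T" using assms by (simp add: T_def sum_nonneg)
  have "b i \<le> T powr (1/P)" if i: "i \<in> A" for i
  proof -
    have "b i powr P \<le> T" unfolding T_def using assms i by (intro member_le_sum) auto
    then have "(b i powr P) powr (1/P) \<le> T powr (1/P)" using assms i by (intro powr_mono2) auto
    then show ?thesis using assms i by (simp add: powr_powr)
  qed
  then have "(\<Sum>i\<in>A. b i) \<le> (\<Sum>i\<in>A. T powr (1/P))" by (rule sum_mono)
  also have "\<dots> = real (card A) * T powr (1/P)" by simp
  finally have "(\<Sum>i\<in>A. b i) powr P \<le> (real (card A) * T powr (1/P)) powr P"
    using assms by (intro powr_mono2) (auto intro: sum_nonneg)
  also have "\<dots> = real (card A) powr P * T"
    using T assms by (simp add: powr_mult powr_powr)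
  finally show ?thesis by (simp add: T_def)
qed

lemma powr_convex0: assumes "1 \<le> p" shows "convex_on {0..} (\<lambda>x::real. x powr p)"
proof (rule convex_onI)
  fix t x y :: real assume t: "0 < t" "t < 1" and x: "x \<in> {0..}" and y: "y \<in> {0..}"
  show "((1 - t) *\<^sub>R x + t *\<^sub>R y) powr p \<le> (1 - t) * x powr p + t * y powr p"
  proof (cases "x = 0 \<or> y = 0")
    case False
    then have "x \<in> {0<..}" "y \<in> {0<..}" using x y by auto
    then show ?thesis using convex_onD[OF powr_convex[OF assms], of t x y] t by simp
  next
    case True
    have tt: "s powr p \<le> s" if "0 \<le> s" "s \<le> 1" for s :: real
      using that assms powr_mono'[of 1 p s] by (cases "s = 0") auto
    show ?thesis using True
    proof
      assume x0: "x = 0"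
      have "(t * y) powr p = t powr p * y powr p" using t y by (simp add: powr_mult)
      also have "\<dots> \<le> t * y powr p" using tt[of t] t by (intro mult_right_mono) auto
      finally show ?thesis using x0 assms by simp
    next
      assume y0: "y = 0"
      have "((1 - t) * x) powr p = (1 - t) powr p * x powr p" using t x by (simp add: powr_mult)
      also have "\<dots> \<le> (1 - t) * x powr p" using tt[of "1 - t"] t by (intro mult_right_mono) auto
      finally show ?thesis using y0 assms by simp
    qed
  qed
qed (rule convex_real_interval)

lemma powr_jensen:
  fixes w a :: "'i \<Rightarrow> real"
  assumes A: "finite A" and w: "\<And>i. i \<in> A \<Longrightarrow> 0 \<le> w i" and a: "\<And>i. i \<in> A \<Longrightarrow> 0 \<le> a i" and P: "1 \<le> P"
  shows "(\<Sum>i\<in>A. w i * a i) powr P \<le> (\<Sum>i\<in>A. w i) powr (P - 1) * (\<Sum>i\<in>A. w i * a i powr P)"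
proof -
  define W where "W = (\<Sum>i\<in>A. w i)"
  have W0: "0 \<le> W" using w by (simp add: W_def sum_nonneg)
  show ?thesis
  proof (cases "W = 0")
    case True
    then have "\<forall>i\<in>A. w i = 0" using A w unfolding W_def by (simp add: sum_nonneg_eq_0_iff)
    then show ?thesis by simp
  next
    case False
    then have Wp: "0 < W" using W0 by simp
    then have ne: "A \<noteq> {}" unfolding W_def by auto
    have "(\<Sum>i\<in>A. (w i / W) *\<^sub>R a i) powr P \<le> (\<Sum>i\<in>A. (w i / W) * a i powr P)"
      using convex_on_sum[OF A ne powr_convex0[OF P], of "\<lambda>i. w i / W" a] w a Wp
      by (auto simp: sum_divide_distrib[symmetric] W_def)
    then have "((\<Sum>i\<in>A. w i * a i) / W) powr P \<le> (\<Sum>i\<in>A. w i * a i powr P) / W"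
      by (simp add: sum_divide_distrib[symmetric])
    then have "(\<Sum>i\<in>A. w i * a i) powr P / W powr P \<le> (\<Sum>i\<in>A. w i * a i powr P) / W"
      using Wp w a by (simp add: powr_divide sum_nonneg)
    then have "(\<Sum>i\<in>A. w i * a i) powr P \<le> (\<Sum>i\<in>A. w i * a i powr P) / W * W powr P"
      using Wp by (simp add: divide_le_eq)
    also have "\<dots> = W powr (P - 1) * (\<Sum>i\<in>A. w i * a i powr P)"
      using Wp by (simp add: powr_diff)
    finally show ?thesis by (simp add: W_def)
  qed
qed


definition rad :: "int \<Rightarrow> real" where "rad k = 2 powr (- real_of_int k)"

lemma rad_pos[simp]: "0 < rad k" by (simp add: rad_def)

lemma rad_sep: "2 powr (- real_of_int n - 1) = rad n / 2"
  by (simp add: rad_def powr_diff)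

lemma rad_le: assumes "k - int m \<le> j" shows "rad j \<le> 2^m * rad k"
proof -
  have "rad j \<le> 2 powr (real m - real_of_int k)" unfolding rad_def using assms by (intro powr_mono) auto
  also have "\<dots> = 2^m * rad k" by (simp add: rad_def powr_diff powr_realpow powr_minus_divide)
  finally show ?thesis .
qed

lemma rad_ratio: "rad k / rad j = 2 powr (real_of_int (j - k))"
  by (simp add: rad_def powr_diff[symmetric] powr_minus_divide)

definition Yset :: "(int \<Rightarrow> 'a::metric_space set) \<Rightarrow> int \<Rightarrow> 'a \<Rightarrow> int \<Rightarrow> 'a set" where
  "Yset S k \<xi> j = {\<eta> \<in> S j. ball \<eta> (rad j) \<inter> ball \<xi> (rad k) \<noteq> {}}"

lemma Y_dist: "\<eta> \<in> Yset S k \<xi> j \<Longrightarrow> dist \<xi> \<eta> < rad k + rad j"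
  unfolding Yset_def by (auto simp: ball_def) (smt (verit) dist_commute dist_triangle)

context hf
begin

definition NL :: "real \<Rightarrow> real" where "NL L = C * (8 * L + 1) powr Q"

lemma NL_pos: "0 \<le> L \<Longrightarrow> 0 < NL L" using C by (simp add: NL_def)

lemma sep': "separated (rad n / 2) (S n)" using sep[of n] by (simp add: rad_sep)

lemma overlap:
  assumes L: "0 < L"
  shows "finite (S k \<inter> ball z (L * rad k)) \<and> real (card (S k \<inter> ball z (L * rad k))) \<le> NL L"
proof -
  have "finite (S k \<inter> ball z (L * rad k)) \<and> real (card (S k \<inter> ball z (L * rad k))) \<le> C * ((4 * (L * rad k) + rad k / 2) / (rad k / 2)) powr Q"
    by (rule counting[OF _ sep']) (use L in auto)
  also have "(4 * (L * rad k) + rad k / 2) / (rad k / 2) = 8 * L + 1"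
    using rad_pos[of k] by (simp add: field_simps del: rad_pos)
  finally show ?thesis by (simp add: NL_def)
qed

lemma countable_S: "countable (S k)"
proof -
  obtain z :: 'a where True by simp
  have "S k \<subseteq> (\<Union>n::nat. S k \<inter> ball z ((real n + 1) * rad k))"
  proof
    fix \<xi> assume "\<xi> \<in> S k"
    obtain n :: nat where "dist z \<xi> / rad k < real n" using reals_Archimedean2 by blast
    then have "dist z \<xi> < real n * rad k" using rad_pos[of k] by (simp add: pos_divide_less_eq del: rad_pos)
    then have "dist z \<xi> < (real n + 1) * rad k" using rad_pos[of k] by (simp add: algebra_simps del: rad_pos)
    then show "\<xi> \<in> (\<Union>n::nat. S k \<inter> ball z ((real n + 1) * rad k))" using \<open>\<xi> \<in> S k\<close> by auto
  qed
  moreover have "countable (\<Union>n::nat. S k \<inter> ball z ((real n + 1) * rad k))"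
  proof -
    have "finite (S k \<inter> ball z ((real n + 1) * rad k))" for n
      using overlap[of "real n + 1" k z] by simp
    then show ?thesis by (intro countable_UN) (auto intro: countable_finite)
  qed
  ultimately show ?thesis by (rule countable_subset)
qed
lemma Y_finite: "finite (Yset S k \<xi> j)"
proof -
  have "Yset S k \<xi> j \<subseteq> S j \<inter> ball \<xi> (((rad k + rad j) / rad j) * rad j)"
  proof
    fix \<eta> assume h: "\<eta> \<in> Yset S k \<xi> j"
    then have "dist \<xi> \<eta> < rad k + rad j" by (rule Y_dist)
    then show "\<eta> \<in> S j \<inter> ball \<xi> (((rad k + rad j) / rad j) * rad j)" using h rad_pos[of j]
      by (auto simp: Yset_def simp del: rad_pos)
  qed
  moreover have "finite (S j \<inter> ball \<xi> (((rad k + rad j) / rad j) * rad j))"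
  proof -
    have pos: "0 < (rad k + rad j) / rad j" using rad_pos[of k] rad_pos[of j] by (simp add: divide_pos_pos add_pos_pos del: rad_pos)
    from overlap[OF pos, of j \<xi>] show ?thesis by blast
  qed
  ultimately show ?thesis by (rule finite_subset)
qed

lemma X_count:
  assumes "k - int m \<le> j"
  shows "finite {\<xi> \<in> S k. \<eta> \<in> Yset S k \<xi> j} \<and> real (card {\<xi> \<in> S k. \<eta> \<in> Yset S k \<xi> j}) \<le> NL (1 + 2^m)"
proof -
  have sub: "{\<xi> \<in> S k. \<eta> \<in> Yset S k \<xi> j} \<subseteq> S k \<inter> ball \<eta> ((1 + 2^m) * rad k)"
  proof
    fix \<xi> assume "\<xi> \<in> {\<xi> \<in> S k. \<eta> \<in> Yset S k \<xi> j}"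
    then have "\<xi> \<in> S k" "dist \<xi> \<eta> < rad k + rad j" using Y_dist by auto
    moreover have "rad j \<le> 2^m * rad k" by (rule rad_le[OF assms])
    ultimately show "\<xi> \<in> S k \<inter> ball \<eta> ((1 + 2^m) * rad k)" by (auto simp: dist_commute algebra_simps)
  qed
  have "finite (S k \<inter> ball \<eta> ((1 + 2^m) * rad k)) \<and> real (card (S k \<inter> ball \<eta> ((1 + 2^m) * rad k))) \<le> NL (1 + 2^m)"
    by (rule overlap) (simp add: add_pos_pos)
  then show ?thesis using sub card_mono[OF _ sub] finite_subset[OF sub]
    by (meson dual_order.trans of_nat_le_iff)
qed

abbreviation mu :: "int \<Rightarrow> 'a \<Rightarrow> real" where "mu k \<xi> \<equiv> measure M (ball \<xi> (rad k))"

lemma mu_pos': "0 < mu k \<xi>" by (rule mu_pos) simp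

lemma D_incl:
  assumes "k - int m \<le> j" "\<eta> \<in> Yset S k \<xi> j"
  shows "ball \<eta> (rad j) \<subseteq> ball \<xi> ((1 + 2^(m+1)) * rad k)"
proof
  fix w assume "w \<in> ball \<eta> (rad j)"
  then have "dist \<eta> w < rad j" by simp
  moreover have "dist \<xi> \<eta> < rad k + rad j" by (rule Y_dist[OF assms(2)])
  moreover have "rad j \<le> 2^m * rad k" by (rule rad_le[OF assms(1)])
  moreover have "dist \<xi> w \<le> dist \<xi> \<eta> + dist \<eta> w" by (rule dist_triangle)
  ultimately show "w \<in> ball \<xi> ((1 + 2^(m+1)) * rad k)" by (simp add: algebra_simps)
qed

lemma D_meas: assumes "1 \<le> L" shows "measure M (ball \<xi> (L * rad k)) \<le> C * L powr Q * mu k \<xi>"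
  using doubling assms by simp

lemma cmp1:
  assumes "k - int m \<le> j" "\<eta> \<in> Yset S k \<xi> j"
  shows "mu j \<eta> \<le> C * (1 + 2^(m+1)) powr Q * mu k \<xi>"
proof -
  have "mu j \<eta> \<le> measure M (ball \<xi> ((1 + 2^(m+1)) * rad k))"
    by (rule mu_mono[OF D_incl[OF assms]]) simp
  also have "\<dots> \<le> C * (1 + 2^(m+1)) powr Q * mu k \<xi>" by (rule D_meas) simp
  finally show ?thesis .
qed

lemma cmp2:
  assumes "k - int m \<le> j" "\<eta> \<in> Yset S k \<xi> j"
  shows "mu k \<xi> \<le> C * (3 * 2^m) powr Q * 2 powr (real_of_int (j - k) * Q) * mu j \<eta>"
proof -
  have d: "dist \<xi> \<eta> < rad k + rad j" by (rule Y_dist[OF assms(2)])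
  have "mu k \<xi> \<le> C * ((2 * rad k + rad j) / rad j) powr Q * mu j \<eta>"
    by (rule dbl3) (use d rad_pos[of k] rad_pos[of j] in \<open>auto simp: dist_commute simp del: rad_pos\<close>)
  also have "(2 * rad k + rad j) / rad j = 2 * (rad k / rad j) + 1"
    using rad_pos[of j] by (simp add: field_simps del: rad_pos)
  also have "\<dots> = 2 * 2 powr (real_of_int (j - k)) + 1" by (simp only: rad_ratio)
  also have "(2 * 2 powr (real_of_int (j - k)) + 1) powr Q \<le> (3 * 2^m * 2 powr (real_of_int (j - k))) powr Q"
  proof -
    have "1 \<le> 2 powr (real m + real_of_int (j - k))" using assms(1) by (intro ge_one_powr_ge_zero) auto
    then have "1 \<le> 2^m * 2 powr (real_of_int (j - k))" by (simp add: powr_add powr_realpow)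
    moreover have "2 * 2 powr (real_of_int (j - k)) \<le> 2 * (2^m * 2 powr (real_of_int (j - k)))"
      by (simp add: mult_le_cancel_right1)
    ultimately have "2 * 2 powr (real_of_int (j - k)) + 1 \<le> 3 * (2^m * 2 powr (real_of_int (j - k)))"
      by linarith
    then show ?thesis using Q by (intro powr_mono2) (auto simp: mult.assoc)
  qed
  also have "(3 * 2^m * 2 powr (real_of_int (j - k))) powr Q = (3 * 2^m) powr Q * 2 powr (real_of_int (j - k) * Q)"
    by (simp add: powr_mult powr_powr)
  finally show ?thesis using C mu_pos'[of \<eta> j] by (simp add: mult_left_mono mult_right_mono mult.assoc)
qed

end


lemma sum_ind_ball:
  fixes f :: "'a::metric_space \<Rightarrow> real"
  assumes "finite Y"
  shows "(\<Sum>\<eta>\<in>Y. f \<eta> * indicator (ball \<eta> r) z) = (\<Sum>\<eta>\<in>Y \<inter> ball z r. f \<eta>)"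
proof -
  have "(\<Sum>\<eta>\<in>Y. f \<eta> * indicator (ball \<eta> r) z) = (\<Sum>\<eta>\<in>Y. f \<eta> * indicator (ball z r) \<eta>)"
    by (intro sum.cong) (auto simp: indicator_def dist_commute)
  also have "\<dots> = (\<Sum>\<eta>\<in>Y \<inter> ball z r. f \<eta>)"
    by (subst sum.inter_restrict[OF assms]) (rule sum.cong, simp_all add: indicator_def of_bool_def)
  finally show ?thesis .
qed

lemma vball_eq: "vball (k, \<xi>) = ball \<xi> (rad k)"
  by (simp add: vball_def rad_def)

context hf
begin

definition Fr :: "(int \<times> 'a \<Rightarrow> complex) \<Rightarrow> int \<Rightarrow> 'a \<Rightarrow> real" where
  "Fr u j z = (\<Sum>\<eta>\<in>S j \<inter> ball z (rad j). cmod (u (j, \<eta>)))"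

definition cc :: "(int \<times> 'a \<Rightarrow> complex) \<Rightarrow> int \<Rightarrow> 'a \<Rightarrow> int \<Rightarrow> real" where
  "cc u k \<xi> j = (\<Sum>\<eta>\<in>Yset S k \<xi> j. (mu j \<eta> / mu k \<xi>) * cmod (u (j, \<eta>)))"

definition gg :: "(int \<times> 'a \<Rightarrow> complex) \<Rightarrow> int \<Rightarrow> int \<Rightarrow> 'a \<Rightarrow> real" where
  "gg u k j z = (\<Sum>\<xi>\<in>S k \<inter> ball z (rad k). cc u k \<xi> j)"

lemma fin_S_ball: "finite (S k \<inter> ball z (rad k))"
  using overlap[of 1 k z] by simp

lemma card_S_ball: "real (card (S k \<inter> ball z (rad k))) \<le> NL 1"
  using overlap[of 1 k z] by simp

lemma Fr_nonneg: "0 \<le> Fr u j z" by (simp add: Fr_def sum_nonneg)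
lemma cc_nonneg: "0 \<le> cc u k \<xi> j"
  unfolding cc_def using mu_pos' by (intro sum_nonneg) (auto intro!: mult_nonneg_nonneg divide_nonneg_pos)
lemma gg_nonneg: "0 \<le> gg u k j z" by (simp add: gg_def sum_nonneg cc_nonneg)

lemma count_ball_sum:
  fixes f :: "'a \<Rightarrow> real"
  assumes "\<And>\<xi>. 0 \<le> f \<xi>"
  shows "(\<integral>\<^sup>+\<xi>. ennreal (f \<xi>) * indicator (ball \<xi> (rad k)) z \<partial>count_space (S k))
     = ennreal (\<Sum>\<xi>\<in>S k \<inter> ball z (rad k). f \<xi>)"
proof -
  have "(\<integral>\<^sup>+\<xi>. ennreal (f \<xi>) * indicator (ball \<xi> (rad k)) z \<partial>count_space (S k))
      = (\<Sum>\<xi>\<in>S k \<inter> ball z (rad k). ennreal (f \<xi>) * indicator (ball \<xi> (rad k)) z)"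
    by (rule nn_integral_count_space'[OF fin_S_ball]) (auto simp: indicator_def dist_commute)
  also have "\<dots> = (\<Sum>\<xi>\<in>S k \<inter> ball z (rad k). ennreal (f \<xi>))"
    by (intro sum.cong) (auto simp: indicator_def dist_commute)
  also have "\<dots> = ennreal (\<Sum>\<xi>\<in>S k \<inter> ball z (rad k). f \<xi>)"
    using assms by simp
  finally show ?thesis .
qed

lemma count_ball_meas:
  "(\<lambda>z. \<integral>\<^sup>+\<xi>. ennreal (f \<xi>) * indicator (ball \<xi> (rad k)) z \<partial>count_space (S k)) \<in> borel_measurable M"
  by (rule measurable_count_sum[OF countable_S]) simp

lemma level_fun_eq: "level_fun S u j z = ennreal (Fr u j z)"
  unfolding level_fun_def Fr_def vball_eq by (rule count_ball_sum) simp

lemma level_fun_meas[measurable]: "level_fun S u j \<in> borel_measurable M"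
  unfolding level_fun_def vball_eq by (rule count_ball_meas)

lemma Fr_meas[measurable]: "Fr u j \<in> borel_measurable M"
proof -
  have "Fr u j = (\<lambda>z. enn2real (level_fun S u j z))"
    by (auto simp: level_fun_eq Fr_nonneg)
  then show ?thesis by simp
qed

lemma gg_eq: "ennreal (gg u k j z) = (\<integral>\<^sup>+\<xi>. ennreal (cc u k \<xi> j) * indicator (ball \<xi> (rad k)) z \<partial>count_space (S k))"
  unfolding gg_def by (rule count_ball_sum[symmetric]) (rule cc_nonneg)

lemma gg_meas[measurable]: "gg u k j \<in> borel_measurable M"
proof -
  have "gg u k j = (\<lambda>z. enn2real (\<integral>\<^sup>+\<xi>. ennreal (cc u k \<xi> j) * indicator (ball \<xi> (rad k)) z \<partial>count_space (S k)))"
    by (auto simp: gg_eq[symmetric] gg_nonneg)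
  moreover have "(\<lambda>z. \<integral>\<^sup>+\<xi>. ennreal (cc u k \<xi> j) * indicator (ball \<xi> (rad k)) z \<partial>count_space (S k)) \<in> borel_measurable M"
    by (rule count_ball_meas)
  ultimately show ?thesis by simp
qed

end


lemma ennreal_sum_ind:
  assumes "\<And>\<eta>. 0 \<le> f \<eta>"
  shows "(\<Sum>\<eta>\<in>Y. ennreal (f \<eta>) * indicator (A \<eta>) z) = ennreal (\<Sum>\<eta>\<in>Y. f \<eta> * indicator (A \<eta>) z)"
proof -
  have "ennreal (f \<eta>) * indicator (A \<eta>) z = ennreal (f \<eta> * indicator (A \<eta>) z)" for \<eta>
    by (simp add: indicator_def)
  then show ?thesis using assms by (simp add: sum_ennreal)
qed

context hf
begin

definition L1 :: "nat \<Rightarrow> real" where "L1 m = 1 + 2^(m+1)"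
definition K1 :: "nat \<Rightarrow> real" where "K1 m = NL 1 * (C * L1 m powr Q)"

lemma L1_ge: "1 \<le> L1 m" by (simp add: L1_def)
lemma K1_pos: "0 < K1 m" using NL_pos[of 1] C L1_ge[of m] by (simp add: K1_def)

lemma ind_count:
  assumes "k - int m \<le> j"
  shows "(\<Sum>\<eta>\<in>Yset S k \<xi> j. indicator (ball \<eta> (rad j)) z) \<le> NL 1 * (indicator (ball \<xi> (L1 m * rad k)) z :: real)"
proof -
  have "(\<Sum>\<eta>\<in>Yset S k \<xi> j. indicator (ball \<eta> (rad j)) z) = (\<Sum>\<eta>\<in>Yset S k \<xi> j. 1 * indicator (ball \<eta> (rad j)) z :: real)"
    by simp
  also have "\<dots> = real (card (Yset S k \<xi> j \<inter> ball z (rad j)))"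
    by (subst sum_ind_ball[OF Y_finite]) simp
  finally have eq: "(\<Sum>\<eta>\<in>Yset S k \<xi> j. indicator (ball \<eta> (rad j)) z) = real (card (Yset S k \<xi> j \<inter> ball z (rad j)))" .
  show ?thesis
  proof (cases "z \<in> ball \<xi> (L1 m * rad k)")
    case True
    have "card (Yset S k \<xi> j \<inter> ball z (rad j)) \<le> card (S j \<inter> ball z (rad j))"
      by (intro card_mono fin_S_ball) (auto simp: Yset_def)
    then show ?thesis using True eq card_S_ball[of j z] by simp
  next
    case False
    have "Yset S k \<xi> j \<inter> ball z (rad j) = {}"
    proof (rule ccontr)
      assume "Yset S k \<xi> j \<inter> ball z (rad j) \<noteq> {}"
      then obtain \<eta> where "\<eta> \<in> Yset S k \<xi> j" "z \<in> ball \<eta> (rad j)" by (auto simp: dist_commute)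
      then have "z \<in> ball \<xi> ((1 + 2^(m+1)) * rad k)" using D_incl[OF assms] by blast
      with False show False by (simp add: L1_def)
    qed
    then show ?thesis using eq False by simp
  qed
qed

lemma W_bound:
  assumes "k - int m \<le> j"
  shows "(\<Sum>\<eta>\<in>Yset S k \<xi> j. mu j \<eta>) \<le> K1 m * mu k \<xi>"
proof -
  have "ennreal (\<Sum>\<eta>\<in>Yset S k \<xi> j. mu j \<eta>) = (\<Sum>\<eta>\<in>Yset S k \<xi> j. emeasure M (ball \<eta> (rad j)))"
    by (simp add: emeasure_ball)
  also have "\<dots> = (\<integral>\<^sup>+z. (\<Sum>\<eta>\<in>Yset S k \<xi> j. indicator (ball \<eta> (rad j)) z) \<partial>M)"
    by (subst nn_integral_sum) auto
  also have "\<dots> = (\<integral>\<^sup>+z. ennreal (\<Sum>\<eta>\<in>Yset S k \<xi> j. indicator (ball \<eta> (rad j)) z) \<partial>M)"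
    by (intro nn_integral_cong) (simp add: ennreal_sum_ind[where f="\<lambda>_. 1", simplified])
  also have "\<dots> \<le> (\<integral>\<^sup>+z. ennreal (NL 1) * indicator (ball \<xi> (L1 m * rad k)) z \<partial>M)"
  proof (intro nn_integral_mono)
    fix z
    have "ennreal (\<Sum>\<eta>\<in>Yset S k \<xi> j. indicator (ball \<eta> (rad j)) z) \<le> ennreal (NL 1 * indicator (ball \<xi> (L1 m * rad k)) z)"
      by (rule ennreal_leI[OF ind_count[OF assms]])
    then show "ennreal (\<Sum>\<eta>\<in>Yset S k \<xi> j. indicator (ball \<eta> (rad j)) z) \<le> ennreal (NL 1) * indicator (ball \<xi> (L1 m * rad k)) z"
      by (cases "z \<in> ball \<xi> (L1 m * rad k)") (simp_all del: of_bool_eq)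
  qed
  also have "\<dots> = ennreal (NL 1) * emeasure M (ball \<xi> (L1 m * rad k))"
    by (rule nn_integral_cmult_indicator) simp
  also have "\<dots> = ennreal (NL 1 * measure M (ball \<xi> (L1 m * rad k)))"
    using NL_pos[of 1] by (simp add: emeasure_ball ennreal_mult)
  also have "\<dots> \<le> ennreal (K1 m * mu k \<xi>)"
    using D_meas[OF L1_ge[of m], of \<xi> k] NL_pos[of 1] by (intro ennreal_leI) (auto simp: K1_def mult.assoc intro: mult_left_mono)
  finally show ?thesis using K1_pos[of m] mu_pos'[of \<xi> k] by (subst (asm) ennreal_le_iff) auto
qed

lemma V_bound:
  assumes "k - int m \<le> j" "1 \<le> P"
  shows "ennreal (\<Sum>\<eta>\<in>Yset S k \<xi> j. mu j \<eta> * cmod (u (j, \<eta>)) powr P)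
    \<le> (\<integral>\<^sup>+z. indicator (ball \<xi> (L1 m * rad k)) z * ennreal (Fr u j z powr P) \<partial>M)"
proof -
  let ?Y = "Yset S k \<xi> j"
  have "ennreal (\<Sum>\<eta>\<in>?Y. mu j \<eta> * cmod (u (j, \<eta>)) powr P)
      = (\<Sum>\<eta>\<in>?Y. ennreal (cmod (u (j, \<eta>)) powr P) * emeasure M (ball \<eta> (rad j)))"
    by (simp add: emeasure_ball ennreal_mult[symmetric] mult.commute)
  also have "\<dots> = (\<integral>\<^sup>+z. (\<Sum>\<eta>\<in>?Y. ennreal (cmod (u (j, \<eta>)) powr P) * indicator (ball \<eta> (rad j)) z) \<partial>M)"
    by (subst nn_integral_sum) (auto simp: nn_integral_cmult_indicator)
  also have "\<dots> = (\<integral>\<^sup>+z. ennreal (\<Sum>\<eta>\<in>?Y. cmod (u (j, \<eta>)) powr P * indicator (ball \<eta> (rad j)) z) \<partial>M)"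
    by (intro nn_integral_cong) (simp add: ennreal_sum_ind)
  also have "\<dots> \<le> (\<integral>\<^sup>+z. indicator (ball \<xi> (L1 m * rad k)) z * ennreal (Fr u j z powr P) \<partial>M)"
  proof (intro nn_integral_mono)
    fix z
    have eq: "(\<Sum>\<eta>\<in>?Y. cmod (u (j, \<eta>)) powr P * indicator (ball \<eta> (rad j)) z)
        = (\<Sum>\<eta>\<in>?Y \<inter> ball z (rad j). cmod (u (j, \<eta>)) powr P)"
      by (rule sum_ind_ball[OF Y_finite])
    show "ennreal (\<Sum>\<eta>\<in>?Y. cmod (u (j, \<eta>)) powr P * indicator (ball \<eta> (rad j)) z)
        \<le> indicator (ball \<xi> (L1 m * rad k)) z * ennreal (Fr u j z powr P)"
    proof (cases "z \<in> ball \<xi> (L1 m * rad k)")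
      case True
      have "(\<Sum>\<eta>\<in>?Y \<inter> ball z (rad j). cmod (u (j, \<eta>)) powr P) \<le> (\<Sum>\<eta>\<in>?Y \<inter> ball z (rad j). cmod (u (j, \<eta>))) powr P"
        using Y_finite assms by (intro powr_superadd) auto
      also have "\<dots> \<le> Fr u j z powr P"
      proof (intro powr_mono2)
        show "(\<Sum>\<eta>\<in>?Y \<inter> ball z (rad j). cmod (u (j, \<eta>))) \<le> Fr u j z"
          unfolding Fr_def by (intro sum_mono2 fin_S_ball) (auto simp: Yset_def)
      qed (use assms in \<open>auto intro: sum_nonneg\<close>)
      finally show ?thesis using True eq by (simp add: ennreal_leI)
    next
      case False
      have "?Y \<inter> ball z (rad j) = {}"
      proof (rule ccontr)
        assume "?Y \<inter> ball z (rad j) \<noteq> {}"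
        then obtain \<eta> where "\<eta> \<in> ?Y" "z \<in> ball \<eta> (rad j)" by (auto simp: dist_commute)
        then have "z \<in> ball \<xi> ((1 + 2^(m+1)) * rad k)" using D_incl[OF assms(1)] by blast
        with False show False by (simp add: L1_def)
      qed
      then show ?thesis using eq False by simp
    qed
  qed
  finally show ?thesis .
qed

lemma per_xi_ge1:
  assumes "k - int m \<le> j" "1 \<le> P"
  shows "ennreal (mu k \<xi> * cc u k \<xi> j powr P)
    \<le> ennreal (K1 m powr (P - 1)) * (\<integral>\<^sup>+z. indicator (ball \<xi> (L1 m * rad k)) z * ennreal (Fr u j z powr P) \<partial>M)"
proof -
  let ?Y = "Yset S k \<xi> j"
  define W where "W = (\<Sum>\<eta>\<in>?Y. mu j \<eta>)"
  define V where "V = (\<Sum>\<eta>\<in>?Y. mu j \<eta> * cmod (u (j, \<eta>)) powr P)"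
  define U where "U = (\<Sum>\<eta>\<in>?Y. mu j \<eta> * cmod (u (j, \<eta>)))"
  have mk: "0 < mu k \<xi>" by (rule mu_pos')
  have W0: "0 \<le> W" by (simp add: W_def sum_nonneg)
  have U0: "0 \<le> U" by (simp add: U_def sum_nonneg)
  have V0: "0 \<le> V" by (simp add: V_def sum_nonneg)
  have ccU: "cc u k \<xi> j = U / mu k \<xi>"
    by (simp add: cc_def U_def sum_divide_distrib)
  have jen: "U powr P \<le> W powr (P - 1) * V"
    unfolding U_def W_def V_def using assms(2) by (intro powr_jensen Y_finite) auto
  have Wb: "W powr (P - 1) \<le> (K1 m * mu k \<xi>) powr (P - 1)"
    using W_bound[OF assms(1)] assms(2) W0 by (intro powr_mono2) (auto simp: W_def)
  have "mu k \<xi> * cc u k \<xi> j powr P = mu k \<xi> * U powr P / mu k \<xi> powr P"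
    using mk U0 by (simp add: ccU powr_divide)
  also have "\<dots> \<le> mu k \<xi> * ((K1 m * mu k \<xi>) powr (P - 1) * V) / mu k \<xi> powr P"
    using jen Wb mk V0 by (intro divide_right_mono mult_left_mono order_trans[OF jen] mult_right_mono) auto
  also have "\<dots> = K1 m powr (P - 1) * V"
    using mk K1_pos[of m] by (simp add: powr_mult powr_diff field_simps)
  finally have "mu k \<xi> * cc u k \<xi> j powr P \<le> K1 m powr (P - 1) * V" .
  then have "ennreal (mu k \<xi> * cc u k \<xi> j powr P) \<le> ennreal (K1 m powr (P - 1)) * ennreal V"
    using V0 by (subst ennreal_mult[symmetric]) (auto intro: ennreal_leI)
  also have "\<dots> \<le> ennreal (K1 m powr (P - 1)) * (\<integral>\<^sup>+z. indicator (ball \<xi> (L1 m * rad k)) z * ennreal (Fr u j z powr P) \<partial>M)"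
    unfolding V_def by (intro mult_left_mono V_bound assms) auto
  finally show ?thesis .
qed

lemma Asum_ge1:
  assumes "k - int m \<le> j" "1 \<le> P"
  shows "(\<integral>\<^sup>+\<xi>. ennreal (mu k \<xi> * cc u k \<xi> j powr P) \<partial>count_space (S k))
    \<le> ennreal (K1 m powr (P - 1) * NL (L1 m)) * (\<integral>\<^sup>+z. ennreal (Fr u j z powr P) \<partial>M)"
proof -
  have "(\<integral>\<^sup>+\<xi>. ennreal (mu k \<xi> * cc u k \<xi> j powr P) \<partial>count_space (S k))
      \<le> (\<integral>\<^sup>+\<xi>. ennreal (K1 m powr (P - 1)) * (\<integral>\<^sup>+z. indicator (ball \<xi> (L1 m * rad k)) z * ennreal (Fr u j z powr P) \<partial>M) \<partial>count_space (S k))"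
    by (intro nn_integral_mono per_xi_ge1 assms)
  also have "\<dots> = ennreal (K1 m powr (P - 1)) * (\<integral>\<^sup>+\<xi>. \<integral>\<^sup>+z. indicator (ball \<xi> (L1 m * rad k)) z * ennreal (Fr u j z powr P) \<partial>M \<partial>count_space (S k))"
    by (rule nn_integral_cmult) simp
  also have "(\<integral>\<^sup>+\<xi>. \<integral>\<^sup>+z. indicator (ball \<xi> (L1 m * rad k)) z * ennreal (Fr u j z powr P) \<partial>M \<partial>count_space (S k))
      = (\<integral>\<^sup>+z. \<integral>\<^sup>+\<xi>. indicator (ball \<xi> (L1 m * rad k)) z * ennreal (Fr u j z powr P) \<partial>count_space (S k) \<partial>M)"
    by (rule nn_integral_count_space_nn_integral[symmetric, OF countable_S]) simp
  also have "\<dots> \<le> (\<integral>\<^sup>+z. ennreal (NL (L1 m)) * ennreal (Fr u j z powr P) \<partial>M)"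
  proof (intro nn_integral_mono)
    fix z
    have fin: "finite (S k \<inter> ball z (L1 m * rad k))" and cd: "real (card (S k \<inter> ball z (L1 m * rad k))) \<le> NL (L1 m)"
      using overlap[of "L1 m" k z] L1_ge[of m] by auto
    have "(\<integral>\<^sup>+\<xi>. indicator (ball \<xi> (L1 m * rad k)) z * ennreal (Fr u j z powr P) \<partial>count_space (S k))
        = (\<integral>\<^sup>+\<xi>. indicator (ball \<xi> (L1 m * rad k)) z \<partial>count_space (S k)) * ennreal (Fr u j z powr P)"
      by (rule nn_integral_multc) simp
    also have "(\<integral>\<^sup>+\<xi>. indicator (ball \<xi> (L1 m * rad k)) z \<partial>count_space (S k))
        = (\<Sum>\<xi>\<in>S k \<inter> ball z (L1 m * rad k). indicator (ball \<xi> (L1 m * rad k)) z)"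
      by (rule nn_integral_count_space'[OF fin]) (auto simp: indicator_def dist_commute)
    also have "\<dots> = ennreal (real (card (S k \<inter> ball z (L1 m * rad k))))"
      by (simp add: indicator_def dist_commute ennreal_of_nat_eq_real_of_nat)
    also have "\<dots> \<le> ennreal (NL (L1 m))" using cd by (rule ennreal_leI)
    finally show "(\<integral>\<^sup>+\<xi>. indicator (ball \<xi> (L1 m * rad k)) z * ennreal (Fr u j z powr P) \<partial>count_space (S k))
        \<le> ennreal (NL (L1 m)) * ennreal (Fr u j z powr P)"
      by (simp add: mult_right_mono)
  qed
  also have "\<dots> = ennreal (NL (L1 m)) * (\<integral>\<^sup>+z. ennreal (Fr u j z powr P) \<partial>M)"
    by (rule nn_integral_cmult) simp
  finally show ?thesis
    using NL_pos[of "L1 m"] L1_ge[of m] K1_pos[of m]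
    by (simp add: ennreal_mult mult.assoc mult_left_mono)
qed

end


context hf
begin

lemma int_ind: "0 \<le> c \<Longrightarrow> (\<integral>\<^sup>+z. ennreal c * indicator (ball \<xi> r) z \<partial>M) = ennreal (measure M (ball \<xi> r) * c)"
  by (simp add: nn_integral_cmult_indicator emeasure_ball ennreal_mult[symmetric] mult.commute)

definition K2 :: "nat \<Rightarrow> real" where "K2 m = C * (3 * 2^m) powr Q"
lemma K2_pos: "0 < K2 m" using C by (simp add: K2_def)

lemma per_term_lt1:
  assumes "k - int m \<le> j" "\<eta> \<in> Yset S k \<xi> j" "0 < P" "P < 1" "0 \<le> a"
  shows "mu k \<xi> * ((mu j \<eta> / mu k \<xi>) * a) powr P
     \<le> (K2 m * 2 powr (real_of_int (j - k) * Q)) powr (1 - P) * (mu j \<eta> * a powr P)"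
proof -
  have mx: "0 < mu k \<xi>" and my: "0 < mu j \<eta>" by (rule mu_pos')+
  have "mu k \<xi> * ((mu j \<eta> / mu k \<xi>) * a) powr P = mu j \<eta> * (mu k \<xi> / mu j \<eta>) powr (1 - P) * a powr P"
    using mx my assms by (simp add: powr_mult powr_divide powr_diff field_simps)
  also have "\<dots> \<le> mu j \<eta> * (K2 m * 2 powr (real_of_int (j - k) * Q)) powr (1 - P) * a powr P"
  proof -
    have "mu k \<xi> / mu j \<eta> \<le> K2 m * 2 powr (real_of_int (j - k) * Q)"
      using cmp2[OF assms(1,2)] my by (simp add: K2_def divide_le_eq mult.assoc)
    then have "(mu k \<xi> / mu j \<eta>) powr (1 - P) \<le> (K2 m * 2 powr (real_of_int (j - k) * Q)) powr (1 - P)"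
      using mx my assms by (intro powr_mono2) auto
    then show ?thesis using my by (intro mult_right_mono mult_left_mono) auto
  qed
  finally show ?thesis by (simp add: mult_ac)
qed

lemma per_xi_lt1:
  assumes "k - int m \<le> j" "0 < P" "P < 1"
  shows "mu k \<xi> * cc u k \<xi> j powr P
     \<le> (K2 m * 2 powr (real_of_int (j - k) * Q)) powr (1 - P) * (\<Sum>\<eta>\<in>Yset S k \<xi> j. mu j \<eta> * cmod (u (j, \<eta>)) powr P)"
proof -
  have mx: "0 < mu k \<xi>" by (rule mu_pos')
  have h1: "cc u k \<xi> j powr P \<le> (\<Sum>\<eta>\<in>Yset S k \<xi> j. ((mu j \<eta> / mu k \<xi>) * cmod (u (j, \<eta>))) powr P)"
    unfolding cc_def using assms mu_pos' by (intro powr_subadd Y_finite) (auto intro: divide_nonneg_pos)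
  have "mu k \<xi> * cc u k \<xi> j powr P \<le> (\<Sum>\<eta>\<in>Yset S k \<xi> j. mu k \<xi> * ((mu j \<eta> / mu k \<xi>) * cmod (u (j, \<eta>))) powr P)"
    using mult_left_mono[OF h1, of "mu k \<xi>"] mx by (simp add: sum_distrib_left)
  also have "\<dots> \<le> (\<Sum>\<eta>\<in>Yset S k \<xi> j. (K2 m * 2 powr (real_of_int (j - k) * Q)) powr (1 - P) * (mu j \<eta> * cmod (u (j, \<eta>)) powr P))"
    by (intro sum_mono per_term_lt1 assms) auto
  finally show ?thesis by (simp add: sum_distrib_left)
qed

lemma sum_level_bound:
  assumes "0 < P"
  shows "(\<integral>\<^sup>+\<eta>. ennreal (mu j \<eta> * cmod (u (j, \<eta>)) powr P) \<partial>count_space (S j))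
    \<le> ennreal (NL 1) * (\<integral>\<^sup>+z. ennreal (Fr u j z powr P) \<partial>M)"
proof -
  have "(\<integral>\<^sup>+\<eta>. ennreal (mu j \<eta> * cmod (u (j, \<eta>)) powr P) \<partial>count_space (S j))
      = (\<integral>\<^sup>+\<eta>. \<integral>\<^sup>+z. ennreal (cmod (u (j, \<eta>)) powr P) * indicator (ball \<eta> (rad j)) z \<partial>M \<partial>count_space (S j))"
  proof (intro nn_integral_cong)
    fix \<eta> show "ennreal (mu j \<eta> * cmod (u (j, \<eta>)) powr P) = (\<integral>\<^sup>+z. ennreal (cmod (u (j, \<eta>)) powr P) * indicator (ball \<eta> (rad j)) z \<partial>M)"
      by (rule int_ind[symmetric]) simp
  qed
  also have "\<dots> = (\<integral>\<^sup>+z. \<integral>\<^sup>+\<eta>. ennreal (cmod (u (j, \<eta>)) powr P) * indicator (ball \<eta> (rad j)) z \<partial>count_space (S j) \<partial>M)"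
    by (rule nn_integral_count_space_nn_integral[symmetric, OF countable_S]) simp
  also have "\<dots> = (\<integral>\<^sup>+z. ennreal (\<Sum>\<eta>\<in>S j \<inter> ball z (rad j). cmod (u (j, \<eta>)) powr P) \<partial>M)"
    by (intro nn_integral_cong count_ball_sum) simp
  also have "\<dots> \<le> (\<integral>\<^sup>+z. ennreal (NL 1) * ennreal (Fr u j z powr P) \<partial>M)"
  proof (intro nn_integral_mono)
    fix z
    have "(\<Sum>\<eta>\<in>S j \<inter> ball z (rad j). cmod (u (j, \<eta>)) powr P) \<le> (\<Sum>\<eta>\<in>S j \<inter> ball z (rad j). Fr u j z powr P)"
    proof (intro sum_mono powr_mono2)
      fix \<eta> assume "\<eta> \<in> S j \<inter> ball z (rad j)"
      then show "cmod (u (j, \<eta>)) \<le> Fr u j z"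
        unfolding Fr_def by (intro member_le_sum fin_S_ball) auto
    qed (use assms in auto)
    also have "\<dots> = real (card (S j \<inter> ball z (rad j))) * Fr u j z powr P" by simp
    also have "\<dots> \<le> NL 1 * Fr u j z powr P" by (intro mult_right_mono card_S_ball) simp
    finally show "ennreal (\<Sum>\<eta>\<in>S j \<inter> ball z (rad j). cmod (u (j, \<eta>)) powr P) \<le> ennreal (NL 1) * ennreal (Fr u j z powr P)"
      using NL_pos[of 1] by (simp add: ennreal_mult[symmetric] ennreal_leI)
  qed
  also have "\<dots> = ennreal (NL 1) * (\<integral>\<^sup>+z. ennreal (Fr u j z powr P) \<partial>M)"
    by (rule nn_integral_cmult) simp
  finally show ?thesis .
qed

lemma Asum_lt1:
  assumes "k - int m \<le> j" "0 < P" "P < 1"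
  shows "(\<integral>\<^sup>+\<xi>. ennreal (mu k \<xi> * cc u k \<xi> j powr P) \<partial>count_space (S k))
    \<le> ennreal (K2 m powr (1 - P) * NL (1 + 2^m) * NL 1 * 2 powr (real_of_int (j - k) * (Q * (1 - P))))
       * (\<integral>\<^sup>+z. ennreal (Fr u j z powr P) \<partial>M)"
proof -
  define G where "G = (K2 m * 2 powr (real_of_int (j - k) * Q)) powr (1 - P)"
  have G0: "0 \<le> G" by (simp add: G_def)
  define h where "h \<eta> = ennreal (mu j \<eta> * cmod (u (j, \<eta>)) powr P)" for \<eta>
  have "(\<integral>\<^sup>+\<xi>. ennreal (mu k \<xi> * cc u k \<xi> j powr P) \<partial>count_space (S k))
      \<le> (\<integral>\<^sup>+\<xi>. ennreal G * (\<integral>\<^sup>+\<eta>. indicator (Yset S k \<xi> j) \<eta> * h \<eta> \<partial>count_space (S j)) \<partial>count_space (S k))"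
  proof (intro nn_integral_mono)
    fix \<xi>
    have "ennreal (mu k \<xi> * cc u k \<xi> j powr P) \<le> ennreal (G * (\<Sum>\<eta>\<in>Yset S k \<xi> j. mu j \<eta> * cmod (u (j, \<eta>)) powr P))"
      unfolding G_def by (intro ennreal_leI per_xi_lt1 assms)
    also have "\<dots> = ennreal G * ennreal (\<Sum>\<eta>\<in>Yset S k \<xi> j. mu j \<eta> * cmod (u (j, \<eta>)) powr P)"
      using G0 by (rule ennreal_mult) (simp add: sum_nonneg)
    also have "ennreal (\<Sum>\<eta>\<in>Yset S k \<xi> j. mu j \<eta> * cmod (u (j, \<eta>)) powr P) = (\<Sum>\<eta>\<in>Yset S k \<xi> j. h \<eta>)"
      by (simp add: h_def)
    also have "(\<Sum>\<eta>\<in>Yset S k \<xi> j. h \<eta>) = (\<integral>\<^sup>+\<eta>. indicator (Yset S k \<xi> j) \<eta> * h \<eta> \<partial>count_space (S j))"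
    proof -
      have "(\<integral>\<^sup>+\<eta>. indicator (Yset S k \<xi> j) \<eta> * h \<eta> \<partial>count_space (S j)) = (\<Sum>\<eta>\<in>Yset S k \<xi> j. indicator (Yset S k \<xi> j) \<eta> * h \<eta>)"
        by (rule nn_integral_count_space'[OF Y_finite]) (auto simp: Yset_def)
      then show ?thesis by simp
    qed
    finally show "ennreal (mu k \<xi> * cc u k \<xi> j powr P) \<le> ennreal G * (\<integral>\<^sup>+\<eta>. indicator (Yset S k \<xi> j) \<eta> * h \<eta> \<partial>count_space (S j))" .
  qed
  also have "\<dots> = ennreal G * (\<integral>\<^sup>+\<xi>. \<integral>\<^sup>+\<eta>. indicator (Yset S k \<xi> j) \<eta> * h \<eta> \<partial>count_space (S j) \<partial>count_space (S k))"
    by (rule nn_integral_cmult) simp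
  also have "(\<integral>\<^sup>+\<xi>. \<integral>\<^sup>+\<eta>. indicator (Yset S k \<xi> j) \<eta> * h \<eta> \<partial>count_space (S j) \<partial>count_space (S k))
      = (\<integral>\<^sup>+\<eta>. \<integral>\<^sup>+\<xi>. indicator (Yset S k \<xi> j) \<eta> * h \<eta> \<partial>count_space (S k) \<partial>count_space (S j))"
    by (rule nn_integral_count_space_nn_integral[OF countable_S]) simp
  also have "\<dots> \<le> (\<integral>\<^sup>+\<eta>. ennreal (NL (1 + 2^m)) * h \<eta> \<partial>count_space (S j))"
  proof (intro nn_integral_mono)
    fix \<eta>
    define A where "A = {\<xi> \<in> S k. \<eta> \<in> Yset S k \<xi> j}"
    have fin: "finite A" and cd: "real (card A) \<le> NL (1 + 2^m)"
      using X_count[OF assms(1), of \<eta>] by (auto simp: A_def)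
    have "(\<integral>\<^sup>+\<xi>. indicator (Yset S k \<xi> j) \<eta> * h \<eta> \<partial>count_space (S k)) = (\<Sum>\<xi>\<in>A. indicator (Yset S k \<xi> j) \<eta> * h \<eta>)"
      by (rule nn_integral_count_space'[OF fin]) (auto simp: A_def indicator_def)
    also have "\<dots> = ennreal (real (card A)) * h \<eta>"
      by (simp add: A_def indicator_def ennreal_of_nat_eq_real_of_nat)
    also have "\<dots> \<le> ennreal (NL (1 + 2^m)) * h \<eta>"
      by (intro mult_right_mono ennreal_leI cd) simp
    finally show "(\<integral>\<^sup>+\<xi>. indicator (Yset S k \<xi> j) \<eta> * h \<eta> \<partial>count_space (S k)) \<le> ennreal (NL (1 + 2^m)) * h \<eta>" .
  qed
  also have "\<dots> = ennreal (NL (1 + 2^m)) * (\<integral>\<^sup>+\<eta>. h \<eta> \<partial>count_space (S j))"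
    by (rule nn_integral_cmult) simp
  also have "(\<integral>\<^sup>+\<eta>. h \<eta> \<partial>count_space (S j)) \<le> ennreal (NL 1) * (\<integral>\<^sup>+z. ennreal (Fr u j z powr P) \<partial>M)"
    unfolding h_def by (rule sum_level_bound[OF assms(2)])
  finally have *: "(\<integral>\<^sup>+\<xi>. ennreal (mu k \<xi> * cc u k \<xi> j powr P) \<partial>count_space (S k))
      \<le> ennreal G * (ennreal (NL (1 + 2^m)) * (ennreal (NL 1) * (\<integral>\<^sup>+z. ennreal (Fr u j z powr P) \<partial>M)))"
    by (simp add: mult_left_mono)
  have "G = K2 m powr (1 - P) * 2 powr (real_of_int (j - k) * (Q * (1 - P)))"
    using K2_pos[of m] by (simp add: G_def powr_mult powr_powr mult.assoc)
  with * show ?thesis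
    using NL_pos[of 1] NL_pos[of "1 + 2^m"] G0 K2_pos[of m]
    by (simp add: ennreal_mult mult_ac)
qed

lemma gg_level:
  assumes "0 < P"
  shows "(\<integral>\<^sup>+z. ennreal (gg u k j z powr P) \<partial>M)
    \<le> ennreal (NL 1 powr P) * (\<integral>\<^sup>+\<xi>. ennreal (mu k \<xi> * cc u k \<xi> j powr P) \<partial>count_space (S k))"
proof -
  have "(\<integral>\<^sup>+z. ennreal (gg u k j z powr P) \<partial>M)
      \<le> (\<integral>\<^sup>+z. ennreal (NL 1 powr P) * (\<integral>\<^sup>+\<xi>. ennreal (cc u k \<xi> j powr P) * indicator (ball \<xi> (rad k)) z \<partial>count_space (S k)) \<partial>M)"
  proof (intro nn_integral_mono)
    fix z
    have "gg u k j z powr P \<le> real (card (S k \<inter> ball z (rad k))) powr P * (\<Sum>\<xi>\<in>S k \<inter> ball z (rad k). cc u k \<xi> j powr P)"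
      unfolding gg_def using assms by (intro powr_crude fin_S_ball) (auto simp: cc_nonneg)
    also have "\<dots> \<le> NL 1 powr P * (\<Sum>\<xi>\<in>S k \<inter> ball z (rad k). cc u k \<xi> j powr P)"
      using card_S_ball[of k z] assms by (intro mult_right_mono powr_mono2 sum_nonneg) auto
    finally have "ennreal (gg u k j z powr P) \<le> ennreal (NL 1 powr P) * ennreal (\<Sum>\<xi>\<in>S k \<inter> ball z (rad k). cc u k \<xi> j powr P)"
      by (simp add: ennreal_mult[symmetric] ennreal_leI sum_nonneg)
    also have "ennreal (\<Sum>\<xi>\<in>S k \<inter> ball z (rad k). cc u k \<xi> j powr P) = (\<integral>\<^sup>+\<xi>. ennreal (cc u k \<xi> j powr P) * indicator (ball \<xi> (rad k)) z \<partial>count_space (S k))"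
      by (rule count_ball_sum[symmetric]) simp
    finally show "ennreal (gg u k j z powr P) \<le> ennreal (NL 1 powr P) * (\<integral>\<^sup>+\<xi>. ennreal (cc u k \<xi> j powr P) * indicator (ball \<xi> (rad k)) z \<partial>count_space (S k))" .
  qed
  also have "\<dots> = ennreal (NL 1 powr P) * (\<integral>\<^sup>+z. \<integral>\<^sup>+\<xi>. ennreal (cc u k \<xi> j powr P) * indicator (ball \<xi> (rad k)) z \<partial>count_space (S k) \<partial>M)"
    by (rule nn_integral_cmult) (rule count_ball_meas)
  also have "(\<integral>\<^sup>+z. \<integral>\<^sup>+\<xi>. ennreal (cc u k \<xi> j powr P) * indicator (ball \<xi> (rad k)) z \<partial>count_space (S k) \<partial>M)
      = (\<integral>\<^sup>+\<xi>. \<integral>\<^sup>+z. ennreal (cc u k \<xi> j powr P) * indicator (ball \<xi> (rad k)) z \<partial>M \<partial>count_space (S k))"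
    by (rule nn_integral_count_space_nn_integral[OF countable_S]) simp
  also have "\<dots> = (\<integral>\<^sup>+\<xi>. ennreal (mu k \<xi> * cc u k \<xi> j powr P) \<partial>count_space (S k))"
  proof (intro nn_integral_cong)
    fix \<xi> show "(\<integral>\<^sup>+z. ennreal (cc u k \<xi> j powr P) * indicator (ball \<xi> (rad k)) z \<partial>M) = ennreal (mu k \<xi> * cc u k \<xi> j powr P)"
      by (rule int_ind) simp
  qed
  finally show ?thesis .
qed

end


context hf
begin

definition rho0 :: "real \<Rightarrow> real" where "rho0 P = (if 1 \<le> P then 0 else Q * (1 - P))"
definition KG :: "nat \<Rightarrow> real \<Rightarrow> real" where
  "KG m P = (if 1 \<le> P then K1 m powr (P - 1) * NL (L1 m) else K2 m powr (1 - P) * NL (1 + 2^m) * NL 1)"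

lemma KG_pos: "0 < KG m P"
  using K1_pos[of m] K2_pos[of m] NL_pos[of 1] NL_pos[of "L1 m"] NL_pos[of "1 + 2^m"] L1_ge[of m]
  by (auto simp: KG_def)

lemma Asum:
  assumes "k - int m \<le> j" "0 < P"
  shows "(\<integral>\<^sup>+\<xi>. ennreal (mu k \<xi> * cc u k \<xi> j powr P) \<partial>count_space (S k))
    \<le> ennreal (KG m P * 2 powr (real_of_int (j - k) * rho0 P)) * (\<integral>\<^sup>+z. ennreal (Fr u j z powr P) \<partial>M)"
proof (cases "1 \<le> P")
  case True
  then show ?thesis using Asum_ge1[OF assms(1) True] by (simp add: KG_def rho0_def)
next
  case False
  then show ?thesis using Asum_lt1[OF assms(1,2), of u] by (simp add: KG_def rho0_def mult_ac)
qed

lemma gg_bound: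
  assumes "k - int m \<le> j" "0 < P"
  shows "(\<integral>\<^sup>+z. ennreal (gg u k j z powr P) \<partial>M)
    \<le> ennreal (NL 1 powr P * KG m P * 2 powr (real_of_int (j - k) * rho0 P)) * (\<integral>\<^sup>+z. ennreal (Fr u j z powr P) \<partial>M)"
proof -
  have "(\<integral>\<^sup>+z. ennreal (gg u k j z powr P) \<partial>M)
    \<le> ennreal (NL 1 powr P) * (ennreal (KG m P * 2 powr (real_of_int (j - k) * rho0 P)) * (\<integral>\<^sup>+z. ennreal (Fr u j z powr P) \<partial>M))"
    by (rule order_trans[OF gg_level[OF assms(2)]]) (intro mult_left_mono Asum assms; simp)
  then show ?thesis using KG_pos[of m P] by (simp add: ennreal_mult mult.assoc)
qed

lemma cc_single:
  assumes "k - int m \<le> j" "0 < P" "\<xi> \<in> S k"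
  shows "ennreal (mu k \<xi> * cc u k \<xi> j powr P)
    \<le> ennreal (KG m P * 2 powr (real_of_int (j - k) * rho0 P)) * (\<integral>\<^sup>+z. ennreal (Fr u j z powr P) \<partial>M)"
  by (rule order_trans[OF count_le_integral[OF assms(3)] Asum[OF assms(1,2)]])

lemma esssup_lower:
  assumes "\<eta> \<in> S j"
  shows "ennreal (cmod (u (j, \<eta>))) \<le> esssup M (level_fun S u j)"
proof (rule ccontr)
  assume "\<not> ?thesis"
  then have lt: "esssup M (level_fun S u j) < ennreal (cmod (u (j, \<eta>)))" by simp
  have ge: "ennreal (cmod (u (j, \<eta>))) \<le> level_fun S u j z" if "z \<in> ball \<eta> (rad j)" for z
  proof -
    have "ennreal (cmod (u (j, \<eta>))) = ennreal (cmod (u (j, \<eta>))) * indicator (vball (j, \<eta>)) z"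
      using that by (simp add: vball_eq)
    also have "\<dots> \<le> level_fun S u j z"
      unfolding level_fun_def by (rule count_le_integral[OF assms])
    finally show ?thesis .
  qed
  have "AE z in M. z \<notin> ball \<eta> (rad j)"
    using esssup_AE[of "level_fun S u j" M]
  proof eventually_elim
    case (elim z)
    show ?case
    proof
      assume "z \<in> ball \<eta> (rad j)"
      with ge[OF this] elim lt show False by (meson leD order.strict_trans1)
    qed
  qed
  then have "ball \<eta> (rad j) \<in> null_sets M" by (subst AE_iff_null_sets) auto
  then have "emeasure M (ball \<eta> (rad j)) = 0" by auto
  with balls show False by (metis rad_pos less_irrefl)
qed

lemma cc_sup:
  assumes "k - int m \<le> j"
  shows "ennreal (cc u k \<xi> j) \<le> ennreal (K1 m) * esssup M (level_fun S u j)"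
proof -
  let ?e = "esssup M (level_fun S u j)"
  have mx: "0 < mu k \<xi>" by (rule mu_pos')
  have "ennreal (cc u k \<xi> j) = (\<Sum>\<eta>\<in>Yset S k \<xi> j. ennreal (mu j \<eta> / mu k \<xi>) * ennreal (cmod (u (j, \<eta>))))"
  proof -
    have eq: "ennreal (mu j \<eta> / mu k \<xi>) * ennreal (cmod (u (j, \<eta>))) = ennreal (mu j \<eta> / mu k \<xi> * cmod (u (j, \<eta>)))" for \<eta>
      using mu_pos'[of \<eta> j] mx by (subst ennreal_mult) auto
    show ?thesis unfolding eq cc_def using mu_pos' by (subst sum_ennreal) (auto intro!: mult_nonneg_nonneg divide_nonneg_pos)
  qed
  also have "\<dots> \<le> (\<Sum>\<eta>\<in>Yset S k \<xi> j. ennreal (mu j \<eta> / mu k \<xi>) * ?e)"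
    by (intro sum_mono mult_left_mono esssup_lower) (auto simp: Yset_def)
  also have "\<dots> = ennreal ((\<Sum>\<eta>\<in>Yset S k \<xi> j. mu j \<eta>) / mu k \<xi>) * ?e"
    using mu_pos' by (simp add: sum_distrib_right[symmetric] sum_divide_distrib divide_nonneg_pos less_imp_le)
  also have "\<dots> \<le> ennreal (K1 m) * ?e"
    using W_bound[OF assms, of \<xi>] mx by (intro mult_right_mono ennreal_leI) (auto simp: divide_le_eq)
  finally show ?thesis .
qed

lemma gg_sup:
  assumes "k - int m \<le> j"
  shows "ennreal (gg u k j z) \<le> ennreal (NL 1 * K1 m) * esssup M (level_fun S u j)"
proof -
  let ?e = "esssup M (level_fun S u j)"
  have "ennreal (gg u k j z) = (\<Sum>\<xi>\<in>S k \<inter> ball z (rad k). ennreal (cc u k \<xi> j))"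
    by (simp add: gg_def cc_nonneg)
  also have "\<dots> \<le> (\<Sum>\<xi>\<in>S k \<inter> ball z (rad k). ennreal (K1 m) * ?e)"
    by (intro sum_mono cc_sup assms)
  also have "\<dots> = ennreal (real (card (S k \<inter> ball z (rad k)))) * (ennreal (K1 m) * ?e)"
    by (simp add: ennreal_of_nat_eq_real_of_nat)
  also have "\<dots> \<le> ennreal (NL 1) * (ennreal (K1 m) * ?e)"
    by (intro mult_right_mono ennreal_leI card_S_ball) simp
  finally show ?thesis using NL_pos[of 1] K1_pos[of m] by (simp add: ennreal_mult mult.assoc)
qed

end


context hf
begin

lemma master_fin:
  fixes G :: "'a \<Rightarrow> ennreal"
  assumes P: "0 < P" and \<tau>: "0 < \<tau>" and K0: "0 \<le> K0"
    and dom: "\<And>z. G z \<le> ennreal K0 * (\<integral>\<^sup>+j. ennreal (gg u k j z) \<partial>count_space {k - int m..})"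
  shows "(\<integral>\<^sup>+z. epowr (G z) P \<partial>M) \<le> ennreal ((K0 * GS \<tau> m) powr P * (NL 1 powr P * KG m P)) *
     (\<integral>\<^sup>+j. ennreal (2 powr (real_of_int (j - k) * (\<tau> * P + rho0 P))) * (\<integral>\<^sup>+z. ennreal (Fr u j z powr P) \<partial>M) \<partial>count_space {k - int m..})"
proof -
  define A where "A = ennreal ((K0 * GS \<tau> m) powr P)"
  have pt: "epowr (G z) P \<le> A * (\<integral>\<^sup>+j. ennreal (2 powr (real_of_int (j - k) * (\<tau> * P))) * ennreal (gg u k j z powr P) \<partial>count_space {k - int m..})" for z
  proof -
    have "(\<integral>\<^sup>+j. ennreal (gg u k j z) \<partial>count_space {k - int m..})
        = (\<integral>\<^sup>+j. ennreal (2 powr (- \<tau> * real_of_int (j - k))) * (ennreal (2 powr (real_of_int (j - k) * \<tau>)) * ennreal (gg u k j z)) \<partial>count_space {k - int m..})"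
      by (intro nn_integral_cong) (simp add: mult.assoc[symmetric] ennreal_mult[symmetric] powr_add[symmetric])
    also have "\<dots> \<le> ennreal (GS \<tau> m) * epowr (\<integral>\<^sup>+j. epowr (ennreal (2 powr (real_of_int (j - k) * \<tau>)) * ennreal (gg u k j z)) P \<partial>count_space {k - int m..}) (1/P)"
      using weighted_sum_le[OF P, where w="\<lambda>j. ennreal (2 powr (- \<tau> * real_of_int (j - k)))"
            and f="\<lambda>j. ennreal (2 powr (real_of_int (j - k) * \<tau>)) * ennreal (gg u k j z)" and I="{k - int m..}"]
      unfolding geom_up[OF \<tau>] .
    also have "(\<integral>\<^sup>+j. epowr (ennreal (2 powr (real_of_int (j - k) * \<tau>)) * ennreal (gg u k j z)) P \<partial>count_space {k - int m..})
        = (\<integral>\<^sup>+j. ennreal (2 powr (real_of_int (j - k) * (\<tau> * P))) * ennreal (gg u k j z powr P) \<partial>count_space {k - int m..})"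
      by (intro nn_integral_cong) (simp add: epowr_scale epowr_ennreal gg_nonneg mult.assoc)
    finally have *: "G z \<le> ennreal K0 * (ennreal (GS \<tau> m) * epowr (\<integral>\<^sup>+j. ennreal (2 powr (real_of_int (j - k) * (\<tau> * P))) * ennreal (gg u k j z powr P) \<partial>count_space {k - int m..}) (1/P))"
      using dom[of z] by (meson mult_left_mono order_trans zero_le)
    have "epowr (G z) P \<le> epowr (ennreal K0 * (ennreal (GS \<tau> m) * epowr (\<integral>\<^sup>+j. ennreal (2 powr (real_of_int (j - k) * (\<tau> * P))) * ennreal (gg u k j z powr P) \<partial>count_space {k - int m..}) (1/P))) P"
      by (rule epowr_mono[OF *]) (use P in simp)
    also have "\<dots> = A * (\<integral>\<^sup>+j. ennreal (2 powr (real_of_int (j - k) * (\<tau> * P))) * ennreal (gg u k j z powr P) \<partial>count_space {k - int m..})"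
      using P K0 GS_pos[OF \<tau>, of m] by (simp add: epowr_mult epowr_ennreal epowr_inv' A_def powr_mult ennreal_mult mult.assoc)
    finally show ?thesis .
  qed
  have inner: "(\<integral>\<^sup>+z. (\<integral>\<^sup>+j. ennreal (2 powr (real_of_int (j - k) * (\<tau> * P))) * ennreal (gg u k j z powr P) \<partial>count_space {k - int m..}) \<partial>M) \<le> ennreal (NL 1 powr P * KG m P) * (\<integral>\<^sup>+j. ennreal (2 powr (real_of_int (j - k) * (\<tau> * P + rho0 P))) * (\<integral>\<^sup>+z. ennreal (Fr u j z powr P) \<partial>M) \<partial>count_space {k - int m..})"
  proof -
    have "(\<integral>\<^sup>+z. (\<integral>\<^sup>+j. ennreal (2 powr (real_of_int (j - k) * (\<tau> * P))) * ennreal (gg u k j z powr P) \<partial>count_space {k - int m..}) \<partial>M)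
        \<le> (\<integral>\<^sup>+j. ennreal (2 powr (real_of_int (j - k) * (\<tau> * P))) * (ennreal (NL 1 powr P * KG m P * 2 powr (real_of_int (j - k) * rho0 P)) * (\<integral>\<^sup>+z. ennreal (Fr u j z powr P) \<partial>M)) \<partial>count_space {k - int m..})"
    proof -
      have "(\<integral>\<^sup>+z. (\<integral>\<^sup>+j. ennreal (2 powr (real_of_int (j - k) * (\<tau> * P))) * ennreal (gg u k j z powr P) \<partial>count_space {k - int m..}) \<partial>M)
        = (\<integral>\<^sup>+j. (\<integral>\<^sup>+z. ennreal (2 powr (real_of_int (j - k) * (\<tau> * P))) * ennreal (gg u k j z powr P) \<partial>M) \<partial>count_space {k - int m..})"
        by (rule nn_integral_count_space_nn_integral) auto
      also have "\<dots> \<le> (\<integral>\<^sup>+j. ennreal (2 powr (real_of_int (j - k) * (\<tau> * P))) * (ennreal (NL 1 powr P * KG m P * 2 powr (real_of_int (j - k) * rho0 P)) * (\<integral>\<^sup>+z. ennreal (Fr u j z powr P) \<partial>M)) \<partial>count_space {k - int m..})"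
      proof (intro nn_integral_mono)
        fix j assume "j \<in> space (count_space {k - int m..})"
        then have j: "k - int m \<le> j" by simp
        show "(\<integral>\<^sup>+z. ennreal (2 powr (real_of_int (j - k) * (\<tau> * P))) * ennreal (gg u k j z powr P) \<partial>M)
            \<le> ennreal (2 powr (real_of_int (j - k) * (\<tau> * P))) * (ennreal (NL 1 powr P * KG m P * 2 powr (real_of_int (j - k) * rho0 P)) * (\<integral>\<^sup>+z. ennreal (Fr u j z powr P) \<partial>M))"
          by (subst nn_integral_cmult, simp, rule mult_left_mono[OF gg_bound[OF j P]], simp)
      qed
      finally show ?thesis .
    qed
    also have "\<dots> = ennreal (NL 1 powr P * KG m P) * (\<integral>\<^sup>+j. ennreal (2 powr (real_of_int (j - k) * (\<tau> * P + rho0 P))) * (\<integral>\<^sup>+z. ennreal (Fr u j z powr P) \<partial>M) \<partial>count_space {k - int m..})"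
    proof -
      have "ennreal (2 powr (real_of_int (j - k) * (\<tau> * P))) * (ennreal (NL 1 powr P * KG m P * 2 powr (real_of_int (j - k) * rho0 P)) * X)
          = ennreal (NL 1 powr P * KG m P) * (ennreal (2 powr (real_of_int (j - k) * (\<tau> * P + rho0 P))) * X)" for j X
      proof -
        have "2 powr (real_of_int (j - k) * (\<tau> * P)) * (NL 1 powr P * KG m P * 2 powr (real_of_int (j - k) * rho0 P))
            = NL 1 powr P * KG m P * 2 powr (real_of_int (j - k) * (\<tau> * P + rho0 P))"
          by (simp add: powr_add[symmetric] algebra_simps)
        note eqn = this
        have B0: "0 \<le> NL 1 powr P * KG m P * 2 powr (real_of_int (j - k) * rho0 P)" using KG_pos[of m P] by simp
        have "ennreal (2 powr (real_of_int (j - k) * (\<tau> * P))) * (ennreal (NL 1 powr P * KG m P * 2 powr (real_of_int (j - k) * rho0 P)) * X)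
            = ennreal (2 powr (real_of_int (j - k) * (\<tau> * P)) * (NL 1 powr P * KG m P * 2 powr (real_of_int (j - k) * rho0 P))) * X"
          using B0 by (simp add: ennreal_mult mult.assoc)
        also note eqn
        also have "ennreal (NL 1 powr P * KG m P * 2 powr (real_of_int (j - k) * (\<tau> * P + rho0 P))) * X
            = ennreal (NL 1 powr P * KG m P) * (ennreal (2 powr (real_of_int (j - k) * (\<tau> * P + rho0 P))) * X)"
          using KG_pos[of m P] by (simp add: ennreal_mult mult.assoc)
        finally show ?thesis .
      qed
      then show ?thesis by (simp add: nn_integral_cmult)
    qed
    finally show ?thesis .
  qed
  have "(\<integral>\<^sup>+z. epowr (G z) P \<partial>M) \<le> (\<integral>\<^sup>+z. A * (\<integral>\<^sup>+j. ennreal (2 powr (real_of_int (j - k) * (\<tau> * P))) * ennreal (gg u k j z powr P) \<partial>count_space {k - int m..}) \<partial>M)"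
    by (intro nn_integral_mono pt)
  also have "\<dots> = A * (\<integral>\<^sup>+z. (\<integral>\<^sup>+j. ennreal (2 powr (real_of_int (j - k) * (\<tau> * P))) * ennreal (gg u k j z powr P) \<partial>count_space {k - int m..}) \<partial>M)"
    by (rule nn_integral_cmult) (rule measurable_count_sum; simp)
  also have "\<dots> \<le> A * (ennreal (NL 1 powr P * KG m P) * (\<integral>\<^sup>+j. ennreal (2 powr (real_of_int (j - k) * (\<tau> * P + rho0 P))) * (\<integral>\<^sup>+z. ennreal (Fr u j z powr P) \<partial>M) \<partial>count_space {k - int m..}))"
    by (rule mult_left_mono[OF inner]) simp
  finally show ?thesis
    using KG_pos[of m P] K0 GS_pos[OF \<tau>, of m] by (simp add: A_def ennreal_mult mult.assoc)
qed

lemma master_sup: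
  fixes G :: "'a \<Rightarrow> ennreal"
  assumes K0: "0 \<le> K0" and Gm: "G \<in> borel_measurable M"
    and dom: "\<And>z. G z \<le> ennreal K0 * (\<integral>\<^sup>+j. ennreal (gg u k j z) \<partial>count_space {k - int m..})"
  shows "esssup M G \<le> ennreal (K0 * (NL 1 * K1 m)) *
     (\<integral>\<^sup>+j. ennreal (2 powr (real_of_int (j - k) * 0)) * esssup M (level_fun S u j) \<partial>count_space {k - int m..})"
proof (rule esssup_I[OF Gm], rule AE_I2)
  fix z
  have "G z \<le> ennreal K0 * (\<integral>\<^sup>+j. ennreal (NL 1 * K1 m) * esssup M (level_fun S u j) \<partial>count_space {k - int m..})"
    by (rule order_trans[OF dom]) (auto intro!: mult_left_mono nn_integral_mono gg_sup)
  also have "\<dots> = ennreal (K0 * (NL 1 * K1 m)) * (\<integral>\<^sup>+j. ennreal (2 powr (real_of_int (j - k) * 0)) * esssup M (level_fun S u j) \<partial>count_space {k - int m..})"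
    using K0 NL_pos[of 1] K1_pos[of m] by (simp add: nn_integral_cmult ennreal_mult mult.assoc)
  finally show "G z \<le> \<dots>" .
qed

end


lemma infsum_norm_le:
  fixes f :: "'b \<Rightarrow> complex"
  assumes fin: "(\<integral>\<^sup>+x. ennreal (norm (f x)) \<partial>count_space A) < \<infinity>"
  shows "f summable_on A" and "ennreal (norm (infsum f A)) \<le> (\<integral>\<^sup>+x. ennreal (norm (f x)) \<partial>count_space A)"
proof -
  have int: "integrable (count_space A) f"
    by (rule integrableI_bounded[OF _ fin]) simp
  then have abs: "Infinite_Set_Sum.abs_summable_on f A"
    by (simp add: Infinite_Set_Sum.abs_summable_on_def)
  then have "Infinite_Sum.abs_summable_on f A" using abs_summable_equivalent by blast
  then show "f summable_on A" using summable_on_iff_abs_summable_on_complex by blast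
  have "norm (infsum f A) = norm (infsetsum f A)" by (simp add: infsetsum_infsum[OF abs])
  also have "\<dots> \<le> infsetsum (\<lambda>x. norm (f x)) A" by (rule norm_infsetsum_bound)
  also have "\<dots> = enn2real (\<integral>\<^sup>+x. ennreal (norm (f x)) \<partial>count_space A)"
    by (rule infsetsum_conv_nn_integral) (use fin in auto)
  finally have le: "ennreal (norm (infsum f A)) \<le> ennreal (enn2real (\<integral>\<^sup>+x. ennreal (norm (f x)) \<partial>count_space A))"
    by (rule ennreal_leI)
  show "ennreal (norm (infsum f A)) \<le> (\<integral>\<^sup>+x. ennreal (norm (f x)) \<partial>count_space A)"
  proof -
    have fin': "(\<integral>\<^sup>+x. ennreal (norm (f x)) \<partial>count_space A) < top" using fin by simp
    show ?thesis using le by (subst (asm) ennreal_enn2real[OF fin'])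
  qed
qed

lemma infsum_norm_le':
  fixes f :: "'b \<Rightarrow> complex"
  shows "ennreal (norm (infsum f A)) \<le> (\<integral>\<^sup>+x. ennreal (norm (f x)) \<partial>count_space A)"
proof (cases "(\<integral>\<^sup>+x. ennreal (norm (f x)) \<partial>count_space A) < \<infinity>")
  case True then show ?thesis by (rule infsum_norm_le(2))
qed (simp add: not_less top_unique)

context hf
begin

lemma Tnbhd_mem: "(j, \<eta>) \<in> Tnbhd S (k, \<xi>) \<longleftrightarrow> k \<le> j \<and> \<eta> \<in> Yset S k \<xi> j"
  by (auto simp: Tnbhd_def filling_def Yset_def vball_eq)

lemma Tterm_norm: "cmod (Tterm M u (k, \<xi>) (j, \<eta>)) = (mu j \<eta> / mu k \<xi>) * cmod (u (j, \<eta>))"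
proof -
  have "0 \<le> mu j \<eta> / mu k \<xi>" using mu_pos'[of \<eta> j] mu_pos'[of \<xi> k] by simp
  then show ?thesis unfolding Tterm_def vball_eq norm_mult norm_of_real by simp
qed

lemma Tnbhd_sum:
  "(\<integral>\<^sup>+y. ennreal (cmod (Tterm M u (k, \<xi>) y)) \<partial>count_space (Tnbhd S (k, \<xi>)))
   = (\<integral>\<^sup>+j. ennreal (cc u k \<xi> j) \<partial>count_space {k..})"
proof -
  define f where "f y = ennreal (cmod (Tterm M u (k, \<xi>) y))" for y
  have "(\<integral>\<^sup>+y. f y \<partial>count_space (Tnbhd S (k, \<xi>))) = (\<integral>\<^sup>+y. f y * indicator (Tnbhd S (k, \<xi>)) y \<partial>count_space UNIV)"
    by (rule nn_integral_count_space_indicator) simp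
  also have "\<dots> = (\<integral>\<^sup>+j. \<integral>\<^sup>+\<eta>. f (j, \<eta>) * indicator (Tnbhd S (k, \<xi>)) (j, \<eta>) \<partial>count_space UNIV \<partial>count_space UNIV)"
    by (rule nn_integral_fst_count_space[symmetric])
  also have "\<dots> = (\<integral>\<^sup>+j. ennreal (cc u k \<xi> j) * indicator {k..} j \<partial>count_space UNIV)"
  proof (intro nn_integral_cong)
    fix j
    show "(\<integral>\<^sup>+\<eta>. f (j, \<eta>) * indicator (Tnbhd S (k, \<xi>)) (j, \<eta>) \<partial>count_space UNIV) = ennreal (cc u k \<xi> j) * indicator {k..} j"
    proof (cases "k \<le> j")
      case True
      have "(\<integral>\<^sup>+\<eta>. f (j, \<eta>) * indicator (Tnbhd S (k, \<xi>)) (j, \<eta>) \<partial>count_space UNIV)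
          = (\<Sum>\<eta>\<in>Yset S k \<xi> j. f (j, \<eta>) * indicator (Tnbhd S (k, \<xi>)) (j, \<eta>))"
        by (rule nn_integral_count_space'[OF Y_finite]) (auto simp: indicator_def Tnbhd_mem)
      also have "\<dots> = (\<Sum>\<eta>\<in>Yset S k \<xi> j. ennreal ((mu j \<eta> / mu k \<xi>) * cmod (u (j, \<eta>))))"
        using True by (intro sum.cong) (auto simp: indicator_def Tnbhd_mem f_def Tterm_norm)
      also have "\<dots> = ennreal (cc u k \<xi> j)"
        unfolding cc_def using mu_pos' by (subst sum_ennreal) (auto intro!: mult_nonneg_nonneg divide_nonneg_pos)
      finally show ?thesis using True by simp
    next
      case False
      then show ?thesis by (simp add: indicator_def Tnbhd_mem)
    qed
  qed
  also have "\<dots> = (\<integral>\<^sup>+j. ennreal (cc u k \<xi> j) \<partial>count_space {k..})"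
    by (rule nn_integral_count_space_indicator[symmetric]) simp
  finally show ?thesis by (simp add: f_def)
qed

lemma T_pointwise:
  assumes "\<xi> \<in> S k"
  shows "ennreal (cmod (T_op M S u (k, \<xi>))) \<le> (\<integral>\<^sup>+j. ennreal (cc u k \<xi> j) \<partial>count_space {k..})"
proof -
  have "(k, \<xi>) \<in> filling S" using assms by (simp add: filling_def)
  then have "T_op M S u (k, \<xi>) = infsum (Tterm M u (k, \<xi>)) (Tnbhd S (k, \<xi>))" by (simp add: T_op_def)
  then show ?thesis using infsum_norm_le'[of "Tterm M u (k, \<xi>)" "Tnbhd S (k, \<xi>)"] Tnbhd_sum by simp
qed

lemma dom_from_pointwise:
  assumes K0: "0 \<le> K0"
    and pw: "\<And>\<xi>. \<xi> \<in> S k \<Longrightarrow> ennreal (cmod (w (k, \<xi>))) \<le> ennreal K0 * (\<integral>\<^sup>+j. ennreal (cc u k \<xi> j) \<partial>count_space J)"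
  shows "level_fun S w k z \<le> ennreal K0 * (\<integral>\<^sup>+j. ennreal (gg u k j z) \<partial>count_space J)"
proof -
  have "level_fun S w k z = (\<integral>\<^sup>+\<xi>. ennreal (cmod (w (k, \<xi>))) * indicator (ball \<xi> (rad k)) z \<partial>count_space (S k))"
    by (simp add: level_fun_def vball_eq)
  also have "\<dots> \<le> (\<integral>\<^sup>+\<xi>. ennreal K0 * ((\<integral>\<^sup>+j. ennreal (cc u k \<xi> j) \<partial>count_space J) * indicator (ball \<xi> (rad k)) z) \<partial>count_space (S k))"
  proof (intro nn_integral_mono)
    fix \<xi> assume "\<xi> \<in> space (count_space (S k))"
    then have "ennreal (cmod (w (k, \<xi>))) \<le> ennreal K0 * (\<integral>\<^sup>+j. ennreal (cc u k \<xi> j) \<partial>count_space J)" by (intro pw) simp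
    then show "ennreal (cmod (w (k, \<xi>))) * indicator (ball \<xi> (rad k)) z \<le> ennreal K0 * ((\<integral>\<^sup>+j. ennreal (cc u k \<xi> j) \<partial>count_space J) * indicator (ball \<xi> (rad k)) z)"
      unfolding mult.assoc[symmetric] by (rule mult_right_mono) simp
  qed
  also have "\<dots> = ennreal K0 * (\<integral>\<^sup>+\<xi>. \<integral>\<^sup>+j. ennreal (cc u k \<xi> j) * indicator (ball \<xi> (rad k)) z \<partial>count_space J \<partial>count_space (S k))"
    by (subst nn_integral_cmult) (auto simp: nn_integral_multc)
  also have "(\<integral>\<^sup>+\<xi>. \<integral>\<^sup>+j. ennreal (cc u k \<xi> j) * indicator (ball \<xi> (rad k)) z \<partial>count_space J \<partial>count_space (S k))
      = (\<integral>\<^sup>+j. \<integral>\<^sup>+\<xi>. ennreal (cc u k \<xi> j) * indicator (ball \<xi> (rad k)) z \<partial>count_space (S k) \<partial>count_space J)"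
    by (rule nn_integral_count_space_nn_integral[symmetric, OF countable_S]) simp
  also have "\<dots> = (\<integral>\<^sup>+j. ennreal (gg u k j z) \<partial>count_space J)"
    by (simp add: gg_eq)
  finally show ?thesis .
qed

lemma T_dom: "level_fun S (T_op M S u) k z \<le> ennreal 1 * (\<integral>\<^sup>+j. ennreal (gg u k j z) \<partial>count_space {k - int 0..})"
  by (rule dom_from_pointwise) (use T_pointwise in simp_all)

lemma Psi_dom:
  assumes Psi1: "\<forall>x\<in>filling S. \<Psi> x \<in> filling S"
    and Psi2: "\<forall>x\<in>filling S. vball (\<Psi> x) \<inter> vball x \<noteq> {}"
    and Psi3: "\<forall>x\<in>filling S. real_of_int \<bar>fst (\<Psi> x) - fst x\<bar> \<le> \<sigma>"
    and m: "m = nat (ceiling \<sigma>)"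
  shows "level_fun S (v \<circ> \<Psi>) k z \<le> ennreal (K2 m * 2 powr (real m * Q)) * (\<integral>\<^sup>+j. ennreal (gg v k j z) \<partial>count_space {k - int m..})"
proof (rule dom_from_pointwise)
  show "0 \<le> K2 m * 2 powr (real m * Q)" using K2_pos[of m] by simp
  fix \<xi> assume \<xi>: "\<xi> \<in> S k"
  then have x: "(k, \<xi>) \<in> filling S" by (simp add: filling_def)
  obtain j \<eta> where eq: "\<Psi> (k, \<xi>) = (j, \<eta>)" by (cases "\<Psi> (k, \<xi>)") auto
  have "\<Psi> (k, \<xi>) \<in> filling S" using Psi1 x by blast
  then have \<eta>: "\<eta> \<in> S j" using eq by (simp add: filling_def)
  have "vball (\<Psi> (k, \<xi>)) \<inter> vball (k, \<xi>) \<noteq> {}" using Psi2 x by blast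
  then have Y: "\<eta> \<in> Yset S k \<xi> j" using eq \<eta> by (simp add: Yset_def vball_eq)
  have d: "real_of_int \<bar>fst (\<Psi> (k, \<xi>)) - fst (k, \<xi>)\<bar> \<le> \<sigma>" using Psi3 x by blast
  then have d: "real_of_int \<bar>j - k\<bar> \<le> \<sigma>" using eq by simp
  then have jl: "k - int m \<le> j" and ju: "j - k \<le> int m" using m by linarith+
  have mx: "0 < mu k \<xi>" and my: "0 < mu j \<eta>" by (rule mu_pos')+
  have "mu k \<xi> \<le> K2 m * 2 powr (real_of_int (j - k) * Q) * mu j \<eta>"
    using cmp2[OF jl Y] by (simp add: K2_def mult.assoc)
  also have "\<dots> \<le> K2 m * 2 powr (real m * Q) * mu j \<eta>"
    using ju Q K2_pos[of m] my by (intro mult_right_mono mult_left_mono powr_mono) auto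
  finally have r: "1 \<le> K2 m * 2 powr (real m * Q) * (mu j \<eta> / mu k \<xi>)"
    using mx by (simp add: field_simps)
  have "cmod (v (j, \<eta>)) \<le> K2 m * 2 powr (real m * Q) * ((mu j \<eta> / mu k \<xi>) * cmod (v (j, \<eta>)))"
    using mult_right_mono[OF r norm_ge_zero[of "v (j, \<eta>)"]] by (simp add: mult.assoc)
  also have "(mu j \<eta> / mu k \<xi>) * cmod (v (j, \<eta>)) \<le> cc v k \<xi> j"
    unfolding cc_def using Y mu_pos' by (intro member_le_sum Y_finite) (auto intro!: mult_nonneg_nonneg divide_nonneg_pos)
  finally have "cmod (v (j, \<eta>)) \<le> K2 m * 2 powr (real m * Q) * cc v k \<xi> j"
    using K2_pos[of m] by (simp add: mult_left_mono)
  then have "ennreal (cmod ((v \<circ> \<Psi>) (k, \<xi>))) \<le> ennreal (K2 m * 2 powr (real m * Q)) * ennreal (cc v k \<xi> j)"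
    using eq K2_pos[of m] by (simp add: ennreal_mult[symmetric] cc_nonneg ennreal_leI)
  also have "\<dots> \<le> ennreal (K2 m * 2 powr (real m * Q)) * (\<integral>\<^sup>+j. ennreal (cc v k \<xi> j) \<partial>count_space {k - int m..})"
    using jl by (intro mult_left_mono count_le_integral) auto
  finally show "ennreal (cmod ((v \<circ> \<Psi>) (k, \<xi>))) \<le> ennreal (K2 m * 2 powr (real m * Q)) * (\<integral>\<^sup>+j. ennreal (cc v k \<xi> j) \<partial>count_space {k - int m..})" .
qed

end


lemma I_norm_Jn: "I_norm M S s p q u = Jn s q (\<lambda>k. Lp_qnorm M p (level_fun S u k))"
  by (simp add: I_norm_def Jn_def Let_def)

lemma Jn_term:
  assumes q: "0 < q"
  shows "ennreal (2 powr (real_of_int j * s)) * a j \<le> Jn s q a"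
proof (cases "q = top")
  case True
  then show ?thesis using SUP_upper[of j UNIV "\<lambda>k. ennreal (2 powr (real_of_int k * s)) * a k"] by (simp add: Jn_def)
next
  case False
  define r where "r = enn2real q"
  have r: "0 < r" using q False by (simp add: r_def enn2real_positive_iff less_top[symmetric])
  have "ennreal (2 powr (real_of_int j * s)) * a j = epowr (epowr (ennreal (2 powr (real_of_int j * s)) * a j) r) (1/r)"
    using r by (simp add: epowr_inv)
  also have "\<dots> \<le> epowr (\<integral>\<^sup>+ k. epowr (ennreal (2 powr (real_of_int k * s)) * a k) r \<partial>count_space UNIV) (1/r)"
    by (rule epowr_mono[OF count_le_integral]) (use r in auto)
  also have "\<dots> = Jn s q a" using False by (simp add: Jn_def r_def epowr_scale)
  finally show ?thesis .
qed

context hf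
begin

definition OPK :: "real \<Rightarrow> ennreal \<Rightarrow> ennreal \<Rightarrow> real \<Rightarrow> nat \<Rightarrow> real" where
  "OPK s p q K0 m = (if p = top then HK s q 1 (K0 * (NL 1 * K1 m)) 0 m
     else (let P = enn2real p; \<tau> = (s * P - rho0 P) / (2 * P) in
       HK s q P ((K0 * GS \<tau> m) powr P * (NL 1 powr P * KG m P)) (\<tau> * P + rho0 P) m))"

lemma P_facts:
  assumes s: "0 < s" and p: "ennreal (Q / (Q + s)) < p" and pt: "p \<noteq> top"
  shows "0 < enn2real p" "p = ennreal (enn2real p)" "rho0 (enn2real p) < s * enn2real p"
proof -
  obtain P where P: "p = ennreal P" "0 \<le> P" using pt by (cases p) auto
  have QP: "Q / (Q + s) < P" using p P Q s by (simp add: ennreal_less_iff)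
  have "0 < Q / (Q + s)" using Q s by simp
  then have Ppos: "0 < P" using QP by linarith
  show "0 < enn2real p" using P Ppos by simp
  show "p = ennreal (enn2real p)" using P by simp
  show "rho0 (enn2real p) < s * enn2real p"
  proof (cases "1 \<le> P")
    case True then show ?thesis using P s Ppos by (simp add: rho0_def)
  next
    case False
    have "Q < P * (Q + s)" using QP Q s by (simp add: divide_less_eq)
    then show ?thesis using P False by (simp add: rho0_def algebra_simps)
  qed
qed

lemma op_bound:
  assumes s: "0 < s" and p: "ennreal (Q / (Q + s)) < p" and q: "0 < q" and K0: "0 \<le> K0"
    and dom: "\<And>k z. level_fun S w k z \<le> ennreal K0 * (\<integral>\<^sup>+j. ennreal (gg u k j z) \<partial>count_space {k - int m..})"
  shows "I_norm M S s p q w \<le> ennreal (OPK s p q K0 m) * I_norm M S s p q u"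
proof (cases "p = top")
  case True
  have "Jn s q (\<lambda>k. Lp_qnorm M p (level_fun S w k)) \<le> ennreal (HK s q 1 (K0 * (NL 1 * K1 m)) 0 m) * Jn s q (\<lambda>k. Lp_qnorm M p (level_fun S u k))"
  proof (rule hardy)
    fix k
    have "esssup M (level_fun S w k) \<le> ennreal (K0 * (NL 1 * K1 m)) *
     (\<integral>\<^sup>+j. ennreal (2 powr (real_of_int (j - k) * 0)) * esssup M (level_fun S u j) \<partial>count_space {k - int m..})"
      by (rule master_sup[OF K0 level_fun_meas dom])
    then show "epowr (Lp_qnorm M p (level_fun S w k)) 1 \<le> ennreal (K0 * (NL 1 * K1 m)) *
       (\<integral>\<^sup>+j. ennreal (2 powr (real_of_int (j - k) * 0)) * epowr (Lp_qnorm M p (level_fun S u j)) 1 \<partial>count_space {k - int m..})"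
      using True by (simp add: Lp_qnorm_def)
  qed (use K0 NL_pos[of 1] K1_pos[of m] s q in auto)
  then show ?thesis using True by (simp add: I_norm_Jn OPK_def)
next
  case False
  define P where "P = enn2real p"
  have P: "0 < P" and pP: "p = ennreal P" and rho: "rho0 P < s * P"
    using P_facts[OF s p False] by (simp_all add: P_def)
  define \<tau> where "\<tau> = (s * P - rho0 P) / (2 * P)"
  have \<tau>: "0 < \<tau>" using rho P by (simp add: \<tau>_def)
  have \<tau>P: "\<tau> * P + rho0 P < s * P" using rho P by (simp add: \<tau>_def field_simps)
  have ep: "epowr (Lp_qnorm M p f) P = (\<integral>\<^sup>+z. epowr (f z) P \<partial>M)" for f
    using P False by (simp add: Lp_qnorm_def P_def epowr_inv')
  have epl: "epowr (level_fun S u j z) P = ennreal (Fr u j z powr P)" for j z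
    by (simp add: level_fun_eq epowr_ennreal Fr_nonneg)
  have epu: "(\<integral>\<^sup>+z. ennreal (Fr u j z powr P) \<partial>M) = epowr (Lp_qnorm M p (level_fun S u j)) P" for j
    unfolding ep by (simp add: level_fun_eq epowr_ennreal Fr_nonneg)
  have "Jn s q (\<lambda>k. Lp_qnorm M p (level_fun S w k)) \<le> ennreal (HK s q P ((K0 * GS \<tau> m) powr P * (NL 1 powr P * KG m P)) (\<tau> * P + rho0 P) m) * Jn s q (\<lambda>k. Lp_qnorm M p (level_fun S u k))"
  proof (rule hardy[OF P _ \<tau>P q])
    fix k
    show "epowr (Lp_qnorm M p (level_fun S w k)) P \<le> ennreal ((K0 * GS \<tau> m) powr P * (NL 1 powr P * KG m P)) *
       (\<integral>\<^sup>+j. ennreal (2 powr (real_of_int (j - k) * (\<tau> * P + rho0 P))) * epowr (Lp_qnorm M p (level_fun S u j)) P \<partial>count_space {k - int m..})"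
      unfolding ep epl by (rule master_fin[OF P \<tau> K0, where G="level_fun S w k" and u=u and k=k and m=m, OF dom])
  qed (use KG_pos[of m P] in simp)
  moreover have opk: "OPK s p q K0 m = HK s q P ((K0 * GS \<tau> m) powr P * (NL 1 powr P * KG m P)) (\<tau> * P + rho0 P) m"
    unfolding OPK_def Let_def P_def \<tau>_def using False by (simp only: if_False)
  ultimately show ?thesis unfolding I_norm_Jn by simp
qed

end


lemma root_bound:
  fixes x mu B P :: real
  assumes "0 \<le> x" "0 < mu" "0 < P" "mu * x powr P \<le> B"
  shows "x \<le> (B / mu) powr (1/P)"
proof -
  have "x powr P \<le> B / mu" using assms by (simp add: pos_le_divide_eq mult.commute)
  then have "(x powr P) powr (1/P) \<le> (B / mu) powr (1/P)" using assms by (intro powr_mono2) auto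
  then show ?thesis using assms by (simp add: powr_powr)
qed

context hf
begin

lemma summ:
  assumes s: "0 < s" and p: "ennreal (Q / (Q + s)) < p" and q: "0 < q"
    and fin: "I_norm M S s p q u < \<infinity>" and \<xi>: "\<xi> \<in> S k"
  shows "(\<integral>\<^sup>+j. ennreal (cc u k \<xi> j) \<partial>count_space {k..}) < \<infinity>"
proof -
  define a where "a j = Lp_qnorm M p (level_fun S u j)" for j
  define I where "I = I_norm M S s p q u"
  obtain Ir where Ir: "I = ennreal Ir" "0 \<le> Ir" using fin unfolding I_def by (cases "I_norm M S s p q u") auto
  have aj: "a j \<le> ennreal (2 powr (- real_of_int j * s) * Ir)" for j
  proof -
    have "ennreal (2 powr (real_of_int j * s)) * a j \<le> I"
      unfolding I_def I_norm_Jn a_def by (rule Jn_term[OF q])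
    then have "ennreal (2 powr (- real_of_int j * s)) * (ennreal (2 powr (real_of_int j * s)) * a j) \<le> ennreal (2 powr (- real_of_int j * s)) * I"
      by (rule mult_left_mono) simp
    moreover have "ennreal (2 powr (- real_of_int j * s)) * (ennreal (2 powr (real_of_int j * s)) * a j) = a j"
      by (simp add: mult.assoc[symmetric] ennreal_mult[symmetric] powr_add[symmetric])
    moreover have "ennreal (2 powr (- real_of_int j * s)) * I = ennreal (2 powr (- real_of_int j * s) * Ir)"
      using Ir by (simp add: ennreal_mult)
    ultimately show ?thesis by simp
  qed
  show ?thesis
  proof (cases "p = top")
    case True
    have "(\<integral>\<^sup>+j. ennreal (cc u k \<xi> j) \<partial>count_space {k..})
        \<le> (\<integral>\<^sup>+j. ennreal (K1 0 * Ir * 2 powr (- real_of_int k * s)) * ennreal (2 powr (- s * real_of_int (j - k))) \<partial>count_space {k..})"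
    proof (intro nn_integral_mono)
      fix j assume "j \<in> space (count_space {k..})"
      then have j: "k - int 0 \<le> j" by simp
      have "ennreal (cc u k \<xi> j) \<le> ennreal (K1 0) * a j"
        using cc_sup[OF j] True by (simp add: a_def Lp_qnorm_def)
      also have "\<dots> \<le> ennreal (K1 0) * ennreal (2 powr (- real_of_int j * s) * Ir)"
        by (intro mult_left_mono aj) simp
      also have "\<dots> = ennreal (K1 0 * Ir * 2 powr (- real_of_int k * s)) * ennreal (2 powr (- s * real_of_int (j - k)))"
      proof -
        have "K1 0 * (2 powr (- real_of_int j * s) * Ir) = K1 0 * Ir * 2 powr (- real_of_int k * s) * 2 powr (- s * real_of_int (j - k))"
          by (simp add: powr_add[symmetric] algebra_simps)
        then show ?thesis using K1_pos[of 0] Ir by (simp add: ennreal_mult[symmetric])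
      qed
      finally show "ennreal (cc u k \<xi> j) \<le> ennreal (K1 0 * Ir * 2 powr (- real_of_int k * s)) * ennreal (2 powr (- s * real_of_int (j - k)))" .
    qed
    also have "\<dots> = ennreal (K1 0 * Ir * 2 powr (- real_of_int k * s)) * ennreal (GS s 0)"
      using geom_up[OF s, of k 0] by (simp add: nn_integral_cmult)
    also have "\<dots> < \<infinity>" by (simp add: ennreal_mult_less_top)
    finally show ?thesis .
  next
    case False
    define P where "P = enn2real p"
    have P: "0 < P" and pP: "p = ennreal P" and rho: "rho0 P < s * P"
      using P_facts[OF s p False] by (simp_all add: P_def)
    define e where "e = s - rho0 P / P"
    have e: "0 < e" using rho P by (simp add: e_def field_simps)
    define c0 where "c0 = (KG 0 P / mu k \<xi>) powr (1/P) * 2 powr (- real_of_int k * s) * Ir"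
    have c0: "0 \<le> c0" using Ir by (simp add: c0_def)
    have "(\<integral>\<^sup>+j. ennreal (cc u k \<xi> j) \<partial>count_space {k..})
        \<le> (\<integral>\<^sup>+j. ennreal c0 * ennreal (2 powr (- e * real_of_int (j - k))) \<partial>count_space {k..})"
    proof (intro nn_integral_mono)
      fix j assume "j \<in> space (count_space {k..})"
      then have j: "k - int 0 \<le> j" by simp
      define B where "B = KG 0 P * 2 powr (real_of_int (j - k) * rho0 P) * (2 powr (- real_of_int j * s) * Ir) powr P"
      have c1: "ennreal (mu k \<xi> * cc u k \<xi> j powr P) \<le> ennreal (KG 0 P * 2 powr (real_of_int (j - k) * rho0 P)) * (\<integral>\<^sup>+z. ennreal (Fr u j z powr P) \<partial>M)"
        by (rule cc_single[OF j P \<xi>])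
      have "(\<integral>\<^sup>+z. ennreal (Fr u j z powr P) \<partial>M) = epowr (a j) P"
        using P False by (simp add: a_def Lp_qnorm_def P_def epowr_inv' level_fun_eq epowr_ennreal Fr_nonneg)
      also have "\<dots> \<le> epowr (ennreal (2 powr (- real_of_int j * s) * Ir)) P"
        by (rule epowr_mono[OF aj]) (use P in simp)
      also have "\<dots> = ennreal ((2 powr (- real_of_int j * s) * Ir) powr P)"
        using Ir by (simp add: epowr_ennreal)
      finally have c2: "(\<integral>\<^sup>+z. ennreal (Fr u j z powr P) \<partial>M) \<le> ennreal ((2 powr (- real_of_int j * s) * Ir) powr P)" .
      have "ennreal (mu k \<xi> * cc u k \<xi> j powr P) \<le> ennreal (KG 0 P * 2 powr (real_of_int (j - k) * rho0 P)) * ennreal ((2 powr (- real_of_int j * s) * Ir) powr P)"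
        by (rule order_trans[OF c1 mult_left_mono[OF c2]]) simp
      also have "\<dots> = ennreal B"
        using KG_pos[of 0 P] by (simp add: B_def ennreal_mult[symmetric])
      finally have "ennreal (mu k \<xi> * cc u k \<xi> j powr P) \<le> ennreal B" .
      then have "mu k \<xi> * cc u k \<xi> j powr P \<le> B"
        using KG_pos[of 0 P] Ir by (subst (asm) ennreal_le_iff) (auto simp: B_def)
      then have "cc u k \<xi> j \<le> (B / mu k \<xi>) powr (1/P)"
        by (rule root_bound[OF cc_nonneg mu_pos' P])
      also have "(B / mu k \<xi>) powr (1/P) = c0 * 2 powr (- e * real_of_int (j - k))"
      proof -
        have "B / mu k \<xi> = (KG 0 P / mu k \<xi>) * 2 powr (real_of_int (j - k) * rho0 P) * (2 powr (- real_of_int j * s) * Ir) powr P"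
          by (simp add: B_def)
        then have "(B / mu k \<xi>) powr (1/P) = (KG 0 P / mu k \<xi>) powr (1/P) * 2 powr (real_of_int (j - k) * rho0 P / P) * (2 powr (- real_of_int j * s) * Ir)"
        proof -
          define Z where "Z = 2 powr (- real_of_int j * s) * Ir"
          define X where "X = KG 0 P / mu k \<xi>"
          define Y where "Y = (2::real) powr (real_of_int (j - k) * rho0 P)"
          have X: "0 \<le> X" using KG_pos[of 0 P] mu_pos'[of \<xi> k] by (simp add: X_def)
          have Y: "0 \<le> Y" by (simp add: Y_def)
          have Z: "0 \<le> Z" using Ir by (simp add: Z_def)
          assume h: "B / mu k \<xi> = KG 0 P / mu k \<xi> * 2 powr (real_of_int (j - k) * rho0 P) * (2 powr (- real_of_int j * s) * Ir) powr P"
          have "(B / mu k \<xi>) powr (1/P) = (X * Y * Z powr P) powr (1/P)" unfolding h X_def Y_def Z_def ..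
          also have "\<dots> = X powr (1/P) * Y powr (1/P) * (Z powr P) powr (1/P)"
            using X Y Z by (simp add: powr_mult)
          also have "(Z powr P) powr (1/P) = Z" using Z P by (simp add: powr_powr)
          also have "Y powr (1/P) = 2 powr (real_of_int (j - k) * rho0 P / P)" by (simp add: Y_def powr_powr)
          finally show ?thesis by (simp add: X_def Z_def)
        qed
        also have "\<dots> = c0 * 2 powr (- e * real_of_int (j - k))"
        proof -
          have "2 powr (real_of_int (j - k) * rho0 P / P) * 2 powr (- real_of_int j * s) = 2 powr (- real_of_int k * s) * (2::real) powr (- e * real_of_int (j - k))"
            using P by (simp add: powr_add[symmetric] e_def field_simps)
          then show ?thesis by (simp add: c0_def mult_ac)
        qed
        finally show ?thesis .
      qed
      finally show "ennreal (cc u k \<xi> j) \<le> ennreal c0 * ennreal (2 powr (- e * real_of_int (j - k)))"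
        using c0 by (simp add: ennreal_mult[symmetric] ennreal_leI)
    qed
    also have "\<dots> = ennreal c0 * ennreal (GS e 0)"
      using geom_up[OF e, of k 0] by (simp add: nn_integral_cmult)
    also have "\<dots> < \<infinity>" by (simp add: ennreal_mult_less_top)
    finally show ?thesis .
  qed
qed

end


lemma (in hf) OPK_nonneg: "0 \<le> OPK s p q K0 m"
  by (simp add: OPK_def Let_def HK_nonneg)

theorem proposition2p4:
  fixes M :: "'a::metric_space measure" and S :: "int \<Rightarrow> 'a set"
    and C Q s :: real and p q :: ennreal
  assumes borel: "sets M = sets borel"
    and balls: "\<forall>\<xi> r. 0 < r \<longrightarrow> 0 < emeasure M (ball \<xi> r) \<and> emeasure M (ball \<xi> r) < \<infinity>"
    and C: "1 \<le> C" and Q: "0 < Q"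
    and doubling: "\<forall>\<xi> r t. 0 < r \<and> 1 \<le> t \<longrightarrow>
        measure M (ball \<xi> (t * r)) \<le> C * t powr Q * measure M (ball \<xi> r)"
    and filling: "\<forall>n. maximal_separated (2 powr (- real_of_int n - 1)) (S n)"
    and s: "0 < s"
    and p: "ennreal (Q / (Q + s)) < p"
    and q: "0 < q"
  shows "(\<forall>u. I_norm M S s p q u < \<infinity> \<longrightarrow>
            (\<forall>x\<in>filling S. Tterm M u x summable_on Tnbhd S x))
       \<and> (\<exists>K. \<forall>u. I_norm M S s p q u < \<infinity> \<longrightarrow>
            I_norm M S s p q (T_op M S u) \<le> ennreal K * I_norm M S s p q u)
       \<and> (\<forall>\<Psi> \<sigma>. (\<forall>x\<in>filling S. \<Psi> x \<in> filling S)
               \<and> (\<forall>x\<in>filling S. vball (\<Psi> x) \<inter> vball x \<noteq> {})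
               \<and> 0 \<le> \<sigma> \<and> (\<forall>x\<in>filling S. real_of_int \<bar>fst (\<Psi> x) - fst x\<bar> \<le> \<sigma>)
             \<longrightarrow> (\<forall>u. I_norm M S s p q u < \<infinity> \<longrightarrow>
                    (\<forall>x\<in>filling S. Tterm M u (\<Psi> x) summable_on Tnbhd S (\<Psi> x)))
               \<and> (\<exists>K. \<forall>u. I_norm M S s p q u < \<infinity> \<longrightarrow>
                    I_norm M S s p q (T_op M S u \<circ> \<Psi>) \<le> ennreal K * I_norm M S s p q u))"
proof -
  interpret hf M S C Q
  proof
    fix n show "separated (2 powr (- real_of_int n - 1)) (S n)"
      using filling by (simp add: maximal_separated_def)
  qed (use borel balls C Q doubling in auto)
  have part1: "Tterm M u x summable_on Tnbhd S x" if fin: "I_norm M S s p q u < \<infinity>" and x: "x \<in> filling S" for u x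
  proof -
    obtain k \<xi> where x_eq: "x = (k, \<xi>)" and \<xi>: "\<xi> \<in> S k" using x by (auto simp: filling_def)
    have "(\<integral>\<^sup>+y. ennreal (norm (Tterm M u (k, \<xi>) y)) \<partial>count_space (Tnbhd S (k, \<xi>))) < \<infinity>"
      using Tnbhd_sum[where u=u and k=k and \<xi>=\<xi>] summ[OF s p q fin \<xi>] by simp
    then show ?thesis unfolding x_eq by (rule infsum_norm_le(1))
  qed
  have part2: "I_norm M S s p q (T_op M S u) \<le> ennreal (OPK s p q 1 0) * I_norm M S s p q u" for u
    by (rule op_bound[OF s p q _ T_dom]) simp
  have A: "\<forall>u. I_norm M S s p q u < \<infinity> \<longrightarrow> (\<forall>x\<in>filling S. Tterm M u x summable_on Tnbhd S x)"
    using part1 by blast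
  have B: "\<exists>K. \<forall>u. I_norm M S s p q u < \<infinity> \<longrightarrow> I_norm M S s p q (T_op M S u) \<le> ennreal K * I_norm M S s p q u"
    using part2 by blast
  have D: "(\<forall>\<Psi> \<sigma>. (\<forall>x\<in>filling S. \<Psi> x \<in> filling S)
               \<and> (\<forall>x\<in>filling S. vball (\<Psi> x) \<inter> vball x \<noteq> {})
               \<and> 0 \<le> \<sigma> \<and> (\<forall>x\<in>filling S. real_of_int \<bar>fst (\<Psi> x) - fst x\<bar> \<le> \<sigma>)
             \<longrightarrow> (\<forall>u. I_norm M S s p q u < \<infinity> \<longrightarrow>
                    (\<forall>x\<in>filling S. Tterm M u (\<Psi> x) summable_on Tnbhd S (\<Psi> x)))
               \<and> (\<exists>K. \<forall>u. I_norm M S s p q u < \<infinity> \<longrightarrow>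
                    I_norm M S s p q (T_op M S u \<circ> \<Psi>) \<le> ennreal K * I_norm M S s p q u))"
  proof (intro allI impI)
    fix \<Psi> :: "int \<times> 'a \<Rightarrow> int \<times> 'a" and \<sigma> :: real
    assume H: "(\<forall>x\<in>filling S. \<Psi> x \<in> filling S) \<and> (\<forall>x\<in>filling S. vball (\<Psi> x) \<inter> vball x \<noteq> {})
               \<and> 0 \<le> \<sigma> \<and> (\<forall>x\<in>filling S. real_of_int \<bar>fst (\<Psi> x) - fst x\<bar> \<le> \<sigma>)"
    have D1: "\<forall>u. I_norm M S s p q u < \<infinity> \<longrightarrow> (\<forall>x\<in>filling S. Tterm M u (\<Psi> x) summable_on Tnbhd S (\<Psi> x))"
      using part1 H by blast
    define m where "m = nat (ceiling \<sigma>)"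
    define K where "K = OPK s p q (K2 m * 2 powr (real m * Q)) m * OPK s p q 1 0"
    have "I_norm M S s p q (T_op M S u \<circ> \<Psi>) \<le> ennreal K * I_norm M S s p q u" for u
    proof -
      have "I_norm M S s p q (T_op M S u \<circ> \<Psi>) \<le> ennreal (OPK s p q (K2 m * 2 powr (real m * Q)) m) * I_norm M S s p q (T_op M S u)"
      proof (rule op_bound[OF s p q])
        show "0 \<le> K2 m * 2 powr (real m * Q)" using K2_pos[of m] by simp
        fix k z
        show "level_fun S (T_op M S u \<circ> \<Psi>) k z \<le> ennreal (K2 m * 2 powr (real m * Q)) * (\<integral>\<^sup>+j. ennreal (gg (T_op M S u) k j z) \<partial>count_space {k - int m..})"
          by (rule Psi_dom) (use H m_def in auto)
      qed
      also have "\<dots> \<le> ennreal (OPK s p q (K2 m * 2 powr (real m * Q)) m) * (ennreal (OPK s p q 1 0) * I_norm M S s p q u)"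
        by (intro mult_left_mono part2) simp
      also have "\<dots> = ennreal K * I_norm M S s p q u"
        using OPK_nonneg by (simp add: K_def ennreal_mult mult.assoc)
      finally show ?thesis .
    qed
    then have D2: "\<exists>K. \<forall>u. I_norm M S s p q u < \<infinity> \<longrightarrow> I_norm M S s p q (T_op M S u \<circ> \<Psi>) \<le> ennreal K * I_norm M S s p q u"
      by blast
    show "(\<forall>u. I_norm M S s p q u < \<infinity> \<longrightarrow>
                    (\<forall>x\<in>filling S. Tterm M u (\<Psi> x) summable_on Tnbhd S (\<Psi> x)))
               \<and> (\<exists>K. \<forall>u. I_norm M S s p q u < \<infinity> \<longrightarrow>
                    I_norm M S s p q (T_op M S u \<circ> \<Psi>) \<le> ennreal K * I_norm M S s p q u)"
      using D1 D2 by (rule conjI)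
  qed
  show ?thesis by (intro conjI A B D)
qed


end
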